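(* For every local function $\phi\in\mathcal C^1(\Theta)$, the map $\nu\mapsto\phi\nu$ (multiplication of the measure by $\phi$, i.e. $(\phi\nu)(f)=\nu(\phi f)$) is a bounded linear operator on $\mathcal B$.
   Context: Let $I=[0,1]$, $d\ge1$, $\Theta=I^{\mathbb Z^d}$ with the product Borel $\sigma$-algebra. A local function is one depending on finitely many coordinates $\theta_i$. For a complex finite Borel measure $\mu$ on $\Theta$ let $\|\mu\|=\sup_{i\in\mathbb Z^d}\sup\{\mu(\partial_{\theta_i}\varphi):\varphi$ smooth local function with $|\varphi|_\infty\le1\}$ and $\mathcal B=\{\mu:\|\mu\|<\infty\}$ normed by $\|\cdot\|$. *)

theory Defs
  imports "HOL-Analysis.Analysis"
begin

text \<open>Configuration space Theta = [0,1]^(Z^d); sites are int^'d with 'd a finite type (d = CARD('d) \<ge> 1).\<close>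

definition Theta :: "(int^'d::finite \<Rightarrow> real) set" where
  "Theta = {\<theta>. \<forall>i. \<theta> i \<in> {0..1}}"

definition ThetaM :: "(int^'d::finite \<Rightarrow> real) measure" where
  "ThetaM = PiM UNIV (\<lambda>_. restrict_space borel {0..(1::real)})"

definition local_fun :: "((int^'d::finite \<Rightarrow> real) \<Rightarrow> 'b) \<Rightarrow> bool" where
  "local_fun \<phi> \<longleftrightarrow> (\<exists>S. finite S \<and> (\<forall>\<theta> \<theta>'. (\<forall>j\<in>S. \<theta> j = \<theta>' j) \<longrightarrow> \<phi> \<theta> = \<phi> \<theta>'))"

definition has_partial :: "int^'d::finite \<Rightarrow> ((int^'d \<Rightarrow> real) \<Rightarrow> real) \<Rightarrow> bool" where
  "has_partial i \<phi> \<longleftrightarrow> (\<forall>\<theta>\<in>Theta. (\<lambda>t. \<phi> (\<theta>(i := t))) differentiable (at (\<theta> i) within {0..1}))"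

definition partial :: "int^'d::finite \<Rightarrow> ((int^'d \<Rightarrow> real) \<Rightarrow> real) \<Rightarrow> (int^'d \<Rightarrow> real) \<Rightarrow> real" where
  "partial i \<phi> \<theta> = (SOME D. ((\<lambda>t. \<phi> (\<theta>(i := t))) has_real_derivative D) (at (\<theta> i) within {0..1}))"

fun Ck :: "nat \<Rightarrow> ((int^'d::finite \<Rightarrow> real) \<Rightarrow> real) \<Rightarrow> bool" where
  "Ck 0 \<phi> \<longleftrightarrow> continuous_on Theta \<phi>"
| "Ck (Suc k) \<phi> \<longleftrightarrow> continuous_on Theta \<phi> \<and> (\<forall>i. has_partial i \<phi> \<and> Ck k (partial i \<phi>))"

definition smooth :: "((int^'d::finite \<Rightarrow> real) \<Rightarrow> real) \<Rightarrow> bool" where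
  "smooth \<phi> \<longleftrightarrow> (\<forall>k. Ck k \<phi>)"

definition complex_measure :: "((int^'d::finite \<Rightarrow> real) set \<Rightarrow> complex) \<Rightarrow> bool" where
  "complex_measure \<nu> \<longleftrightarrow>
     (\<forall>A. A \<notin> sets ThetaM \<longrightarrow> \<nu> A = 0) \<and> \<nu> {} = 0 \<and>
     (\<forall>A::nat \<Rightarrow> _. range A \<subseteq> sets ThetaM \<longrightarrow> disjoint_family A \<longrightarrow>
        (\<lambda>n. \<nu> (A n)) sums \<nu> (\<Union>n. A n))"

definition cm_integral :: "((int^'d::finite \<Rightarrow> real) set \<Rightarrow> complex) \<Rightarrow> ((int^'d \<Rightarrow> real) \<Rightarrow> real) \<Rightarrow> complex" where
  "cm_integral \<nu> f = (SOME c. \<exists>\<mu>1 \<mu>2 \<mu>3 \<mu>4.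
      (\<forall>\<mu>\<in>{\<mu>1,\<mu>2,\<mu>3,\<mu>4}. finite_measure \<mu> \<and> sets \<mu> = sets ThetaM) \<and>
      (\<forall>A\<in>sets ThetaM. \<nu> A = complex_of_real (measure \<mu>1 A - measure \<mu>2 A)
                                + \<i> * complex_of_real (measure \<mu>3 A - measure \<mu>4 A)) \<and>
      c = complex_of_real ((\<integral>x. f x \<partial>\<mu>1) - (\<integral>x. f x \<partial>\<mu>2))
          + \<i> * complex_of_real ((\<integral>x. f x \<partial>\<mu>3) - (\<integral>x. f x \<partial>\<mu>4)))"

definition cm_norm :: "((int^'d::finite \<Rightarrow> real) set \<Rightarrow> complex) \<Rightarrow> ereal" where
  "cm_norm \<nu> = (SUP p \<in> {(i, \<phi>). smooth \<phi> \<and> local_fun \<phi> \<and> (\<forall>\<theta>\<in>Theta. \<bar>\<phi> \<theta>\<bar> \<le> 1)}.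
                  ereal (cmod (cm_integral \<nu> (partial (fst p) (snd p)))))"

definition Bspace :: "((int^'d::finite \<Rightarrow> real) set \<Rightarrow> complex) set" where
  "Bspace = {\<nu>. complex_measure \<nu> \<and> cm_norm \<nu> < \<infinity>}"

definition mult_measure :: "((int^'d::finite \<Rightarrow> real) \<Rightarrow> real) \<Rightarrow> ((int^'d \<Rightarrow> real) set \<Rightarrow> complex) \<Rightarrow> ((int^'d \<Rightarrow> real) set \<Rightarrow> complex)" where
  "mult_measure \<phi> \<nu> = (\<lambda>A. if A \<in> sets ThetaM then cm_integral \<nu> (\<lambda>\<theta>. \<phi> \<theta> * indicator A \<theta>) else 0)"

end

theory Submission
  imports Defs "HOL-Analysis.Analysis"
begin


lemma at01_nontriv: "x \<in> {0..1::real} \<Longrightarrow> at x within {0..1} \<noteq> bot"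
  using islimpt_closure_open[where s="{0<..<1::real}" and x=x]
  by (auto simp: trivial_limit_within)

definition pev :: "(real \<times> 'i list) list \<Rightarrow> ('i \<Rightarrow> real) \<Rightarrow> real" where
  "pev ps \<theta> = sum_list (map (\<lambda>(c,L). c * prod_list (map \<theta> L)) ps)"

definition pmul :: "(real \<times> 'i list) list \<Rightarrow> (real \<times> 'i list) list \<Rightarrow> (real \<times> 'i list) list" where
  "pmul ps qs = concat (map (\<lambda>(c,L). map (\<lambda>(d,K). (c*d, L@K)) qs) ps)"

definition dpoly :: "'i \<Rightarrow> (real \<times> 'i list) list \<Rightarrow> (real \<times> 'i list) list" where
  "dpoly i ps = map (\<lambda>(c,L). (c * real (count_list L i), remove1 i L)) ps"

definition anti :: "'i \<Rightarrow> (real \<times> 'i list) list \<Rightarrow> (real \<times> 'i list) list" where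
  "anti i ps = map (\<lambda>(c,L). (c / real (count_list L i + 1), i # L)) ps"

definition kill :: "'i \<Rightarrow> (real \<times> 'i list) list \<Rightarrow> (real \<times> 'i list) list" where
  "kill i ps = filter (\<lambda>(c,L). i \<notin> set L) ps"

definition pscale :: "real \<Rightarrow> (real \<times> 'i list) list \<Rightarrow> (real \<times> 'i list) list" where
  "pscale r ps = map (\<lambda>(c,L). (r*c, L)) ps"

lemma pev_Nil[simp]: "pev [] \<theta> = 0" by (simp add: pev_def)
lemma pev_Cons[simp]: "pev ((c,L)#ps) \<theta> = c * prod_list (map \<theta> L) + pev ps \<theta>" by (simp add: pev_def)
lemma pev_append[simp]: "pev (ps @ qs) \<theta> = pev ps \<theta> + pev qs \<theta>" by (simp add: pev_def)

lemma pev_pmul[simp]: "pev (pmul ps qs) \<theta> = pev ps \<theta> * pev qs \<theta>"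
proof (induction ps)
  case Nil then show ?case by (simp add: pmul_def)
next
  case (Cons p ps)
  obtain c L where p: "p = (c,L)" by (cases p)
  have "pev (map (\<lambda>(d,K). (c*d, L@K)) qs) \<theta> = c * prod_list (map \<theta> L) * pev qs \<theta>"
    by (induction qs) (auto simp: algebra_simps)
  with Cons show ?case by (simp add: pmul_def p algebra_simps)
qed

lemma pev_pscale[simp]: "pev (pscale r ps) \<theta> = r * pev ps \<theta>"
  by (induction ps) (auto simp: pscale_def algebra_simps)

lemma dpoly_anti[simp]: "dpoly i (anti i ps) = ps"
  by (induction ps) (auto simp: dpoly_def anti_def)

lemma prod_remove1: fixes \<theta> :: "'i \<Rightarrow> real" shows "i \<in> set L \<Longrightarrow> prod_list (map \<theta> L) = \<theta> i * prod_list (map \<theta> (remove1 i L))"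
proof (induction L)
  case (Cons a L) then show ?case by (cases "a = i") (auto simp: mult.left_commute[of "\<theta> a"])
qed simp

lemma mono_deriv:
  "((\<lambda>t. prod_list (map (\<theta>(i:=t)) L)) has_real_derivative
      real (count_list L i) * prod_list (map (\<theta>(i:=t)) (remove1 i L))) (at t)"
proof (induction L)
  case Nil then show ?case by (auto intro!: derivative_eq_intros)
next
  case (Cons j L)
  show ?case
  proof (cases "j = i")
    case True
    have "((\<lambda>t. t * prod_list (map (\<theta>(i:=t)) L)) has_real_derivative
       1 * prod_list (map (\<theta>(i:=t)) L) + t * (real (count_list L i) * prod_list (map (\<theta>(i:=t)) (remove1 i L)))) (at t)"
      by (rule DERIV_cong[OF DERIV_mult'[OF DERIV_ident Cons]]) (simp add: algebra_simps del: fun_upd_apply)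
    moreover have "1 * prod_list (map (\<theta>(i:=t)) L) + t * (real (count_list L i) * prod_list (map (\<theta>(i:=t)) (remove1 i L)))
       = real (count_list (j#L) i) * prod_list (map (\<theta>(i:=t)) (remove1 i (j#L)))"
    proof (cases "i \<in> set L")
      case True
      then show ?thesis using \<open>j = i\<close> prod_remove1[OF True, of "\<theta>(i:=t)"] by (simp add: algebra_simps)
    next
      case False
      then show ?thesis using \<open>j = i\<close> by (simp add: count_list_0_iff)
    qed
    moreover have "(\<lambda>t. prod_list (map (\<theta>(i:=t)) (j#L))) = (\<lambda>t. t * prod_list (map (\<theta>(i:=t)) L))"
      using True by simp
    ultimately show ?thesis by (metis (no_types, lifting) DERIV_cong)
  next
    case False
    have "((\<lambda>t. \<theta> j * prod_list (map (\<theta>(i:=t)) L)) has_real_derivative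
       \<theta> j * (real (count_list L i) * prod_list (map (\<theta>(i:=t)) (remove1 i L)))) (at t)"
      by (rule DERIV_cmult[OF Cons])
    moreover have "(\<lambda>t. prod_list (map (\<theta>(i:=t)) (j#L))) = (\<lambda>t. \<theta> j * prod_list (map (\<theta>(i:=t)) L))"
      using False by simp
    moreover have "real (count_list (j#L) i) * prod_list (map (\<theta>(i:=t)) (remove1 i (j#L))) = 
        \<theta> j * (real (count_list L i) * prod_list (map (\<theta>(i:=t)) (remove1 i L)))"
      using False by (simp add: algebra_simps)
    ultimately show ?thesis by (metis (no_types, lifting) DERIV_cong)
  qed
qed

lemma pev_deriv:
  "((\<lambda>t. pev ps (\<theta>(i:=t))) has_real_derivative pev (dpoly i ps) (\<theta>(i:=t))) (at t)"
proof (induction ps)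
  case Nil then show ?case by (simp add: dpoly_def)
next
  case (Cons p ps)
  obtain c L where p: "p = (c,L)" by (cases p)
  have "((\<lambda>t. c * prod_list (map (\<theta>(i:=t)) L) + pev ps (\<theta>(i:=t))) has_real_derivative
      c * (real (count_list L i) * prod_list (map (\<theta>(i:=t)) (remove1 i L))) + pev (dpoly i ps) (\<theta>(i:=t))) (at t)"
    by (intro DERIV_add DERIV_cmult mono_deriv Cons)
  then show ?case unfolding p pev_Cons by (rule DERIV_cong) (simp add: dpoly_def del: fun_upd_apply)
qed

lemma pev_kill: "pev (kill i ps) \<theta> = pev ps (\<theta>(i:=0))"
proof (induction ps)
  case Nil then show ?case by (simp add: kill_def)
next
  case (Cons p ps)
  obtain c L where p: "p = (c,L)" by (cases p)
  have a: "i \<notin> set L \<Longrightarrow> prod_list (map (\<theta>(i:=0)) L) = prod_list (map \<theta> L)"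
    by (induction L) auto
  have b: "i \<in> set L \<Longrightarrow> prod_list (map (\<theta>(i:=0)) L) = 0"
    using prod_remove1[of i L "\<theta>(i:=0)"] by simp
  show ?case using Cons a b by (cases "i \<in> set L") (auto simp: kill_def p simp del: fun_upd_apply)
qed

lemma pev_dpoly_kill: "pev (dpoly i (kill i ps)) \<theta> = 0"
  by (induction ps) (auto simp: dpoly_def kill_def count_list_0_iff)

lemma pev_anti_0: "pev (anti i ps) (\<theta>(i:=0)) = 0"
  by (induction ps) (auto simp: anti_def)

lemma pev_local: "\<forall>\<theta> \<theta>'. (\<forall>j\<in>(\<Union>(c,L)\<in>set ps. set L). \<theta> j = \<theta>' j) \<longrightarrow> pev ps \<theta> = pev ps \<theta>'"
proof (induction ps)
  case Nil then show ?case by simp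
next
  case (Cons p ps)
  obtain c L where p: "p = (c,L)" by (cases p)
  have PL: "\<And>\<theta> \<theta>'. (\<forall>j\<in>set L. \<theta> j = \<theta>' j) \<Longrightarrow> prod_list (map \<theta> L) = prod_list (map \<theta>' L)"
    by (metis map_eq_conv)
  show ?case
  proof (intro allI impI)
    fix \<theta> \<theta>' :: "'a \<Rightarrow> real"
    assume h: "\<forall>j\<in>(\<Union>(c,L)\<in>set (p#ps). set L). \<theta> j = \<theta>' j"
    have "\<forall>j\<in>(\<Union>(c,L)\<in>set ps. set L). \<theta> j = \<theta>' j" using h by auto
    then have "pev ps \<theta> = pev ps \<theta>'" using Cons.IH by blast
    moreover have "prod_list (map \<theta> L) = prod_list (map \<theta>' L)" by (rule PL) (use h in \<open>auto simp: p\<close>)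
    ultimately show "pev (p#ps) \<theta> = pev (p#ps) \<theta>'" by (simp add: p)
  qed
qed

lemma local_pev: "local_fun (pev ps)"
  unfolding local_fun_def
  by (rule exI[of _ "\<Union>(c,L)\<in>set ps. set L"]) (auto intro: pev_local[rule_format] simp: case_prod_beta)

lemma cont_pev: "continuous_on UNIV (pev ps)"
proof (induction ps)
  case Nil then show ?case by simp
next
  case (Cons p ps)
  obtain c L where p: "p = (c,L)" by (cases p)
  have "continuous_on UNIV (\<lambda>\<theta>::'a\<Rightarrow>real. prod_list (map \<theta> L))"
  proof (induction L)
    case Nil then show ?case by (simp add: continuous_on_const)
  next
    case (Cons j L)
    have "continuous_on UNIV (\<lambda>\<theta>::'a\<Rightarrow>real. \<theta> j * prod_list (map \<theta> L))"
      by (rule continuous_on_mult[OF continuous_on_product_coordinates Cons.IH])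
    then show ?case by simp
  qed
  then have "continuous_on UNIV (\<lambda>\<theta>::'a\<Rightarrow>real. c * prod_list (map \<theta> L) + pev ps \<theta>)"
    by (intro continuous_on_add continuous_on_mult continuous_on_const Cons.IH)
  then show ?case by (simp add: p)
qed

lemma Theta_upd: "\<theta> \<in> Theta \<Longrightarrow> t \<in> {0..1} \<Longrightarrow> \<theta>(i:=t) \<in> Theta"
  by (auto simp: Theta_def)

lemma Theta_mem: "\<theta> \<in> Theta \<Longrightarrow> \<theta> i \<in> {0..1}"
  by (auto simp: Theta_def)

lemma space_ThetaM: "space ThetaM = Theta"
  by (auto simp: ThetaM_def Theta_def space_PiM PiE_def extensional_def)

lemma deriv_cong01:
  assumes "\<And>t. t \<in> {0..1} \<Longrightarrow> f t = g t" "x \<in> {0..1::real}"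
  shows "(f has_real_derivative D) (at x within {0..1}) \<longleftrightarrow> (g has_real_derivative D) (at x within {0..1})"
  by (rule has_field_derivative_cong_ev[OF refl _ refl refl assms(2)]) (intro always_eventually, simp add: assms(1))

lemma partial_eq:
  assumes "\<theta> \<in> Theta" "((\<lambda>t. f (\<theta>(i:=t))) has_real_derivative D) (at (\<theta> i) within {0..1})"
  shows "partial i f \<theta> = D"
proof -
  have "((\<lambda>t. f (\<theta>(i:=t))) has_real_derivative partial i f \<theta>) (at (\<theta> i) within {0..1})"
    unfolding partial_def by (rule someI[of _ D]) (rule assms(2))
  then show ?thesis
    using has_field_derivative_unique[OF _ assms(2) at01_nontriv[OF Theta_mem[OF assms(1)]]] by blast
qed

lemma partial_deriv:
  assumes "has_partial i f" "\<theta> \<in> Theta"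
  shows "((\<lambda>t. f (\<theta>(i:=t))) has_real_derivative partial i f \<theta>) (at (\<theta> i) within {0..1})"
proof -
  from assms have "(\<lambda>t. f (\<theta>(i:=t))) differentiable (at (\<theta> i) within {0..1})"
    by (auto simp: has_partial_def)
  then obtain D where "((\<lambda>t. f (\<theta>(i:=t))) has_real_derivative D) (at (\<theta> i) within {0..1})"
    by (auto simp: real_differentiable_def)
  then show ?thesis using partial_eq[OF assms(2)] by simp
qed

lemma has_partialI:
  assumes "\<And>\<theta>. \<theta> \<in> Theta \<Longrightarrow> ((\<lambda>t. f (\<theta>(i:=t))) has_real_derivative D \<theta>) (at (\<theta> i) within {0..1})"
  shows "has_partial i f"
  using assms by (auto simp: has_partial_def real_differentiable_def)

lemma Ck_cong: "(\<And>\<theta>. \<theta> \<in> Theta \<Longrightarrow> f \<theta> = g \<theta>) \<Longrightarrow> Ck k f = Ck k g"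
proof (induction k arbitrary: f g)
  case 0 show ?case unfolding Ck.simps by (rule continuous_on_cong[OF refl 0])
next
  case (Suc k)
  have eqv: "((\<lambda>t. f (\<theta>(i:=t))) has_real_derivative D) (at (\<theta> i) within {0..1}) \<longleftrightarrow>
      ((\<lambda>t. g (\<theta>(i:=t))) has_real_derivative D) (at (\<theta> i) within {0..1})" if "\<theta> \<in> Theta" for \<theta> i D
    by (rule deriv_cong01[OF Suc.prems[OF Theta_upd[OF that]] Theta_mem[OF that]])
  have hp: "has_partial i f = has_partial i g" for i
    unfolding has_partial_def real_differentiable_def by (intro ball_cong refl ex_cong1 eqv)
  have pp: "partial i f \<theta> = partial i g \<theta>" if "\<theta> \<in> Theta" for i \<theta>
    unfolding partial_def by (rule arg_cong[where f=Eps]) (rule ext, rule eqv[OF that])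
  have ck: "Ck k (partial i f) = Ck k (partial i g)" for i
    by (rule Suc.IH) (rule pp)
  have co: "continuous_on Theta f = continuous_on Theta g"
    by (rule continuous_on_cong[OF refl Suc.prems])
  show ?case unfolding Ck.simps co hp ck ..
qed

lemma pev_deriv_th: "((\<lambda>t. pev ps (\<theta>(i:=t))) has_real_derivative pev (dpoly i ps) \<theta>) (at (\<theta> i) within S)"
  using pev_deriv[of ps \<theta> i "\<theta> i"] by (auto intro: has_field_derivative_at_within)

lemma partial_pev: "\<theta> \<in> Theta \<Longrightarrow> partial i (pev ps) \<theta> = pev (dpoly i ps) \<theta>"
  by (rule partial_eq) (auto intro: pev_deriv_th)

lemma has_partial_pev: "has_partial i (pev ps)"
  by (rule has_partialI[where D="pev (dpoly i ps)"]) (rule pev_deriv_th)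

lemma Ck_pev: "Ck k (pev ps)"
proof (induction k arbitrary: ps)
  case 0 then show ?case using continuous_on_subset[OF cont_pev subset_UNIV] by simp
next
  case (Suc k)
  have "Ck k (partial i (pev ps)) = Ck k (pev (dpoly i ps))" for i
    by (rule Ck_cong) (rule partial_pev)
  then show ?case using Suc.IH has_partial_pev continuous_on_subset[OF cont_pev subset_UNIV] by (metis Ck.simps(2))
qed

lemma smooth_pev: "smooth (pev ps)"
  unfolding smooth_def using Ck_pev by blast

lemma meas_coord: "(\<lambda>\<theta>. \<theta> j) \<in> borel_measurable ThetaM"
proof -
  have "(\<lambda>\<theta>. \<theta> j) \<in> measurable ThetaM (restrict_space borel {0..1::real})"
    unfolding ThetaM_def by (rule measurable_component_singleton) simp
  then show ?thesis by (simp add: measurable_restrict_space2_iff)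
qed

lemma meas_pev: "pev ps \<in> borel_measurable ThetaM"
proof (induction ps)
  case Nil then show ?case by (simp add: pev_def)
next
  case (Cons p ps)
  obtain c L where p: "p = (c,L)" by (cases p)
  have "(\<lambda>\<theta>. prod_list (map \<theta> L)) \<in> borel_measurable ThetaM"
  proof (induction L)
    case Nil then show ?case by simp
  next
    case (Cons j L)
    have "(\<lambda>\<theta>. \<theta> j * prod_list (map \<theta> L)) \<in> borel_measurable ThetaM"
      by (rule borel_measurable_times[OF meas_coord Cons.IH])
    then show ?case by simp
  qed
  then have "(\<lambda>\<theta>. c * prod_list (map \<theta> L) + pev ps \<theta>) \<in> borel_measurable ThetaM"
    by (intro borel_measurable_add borel_measurable_times borel_measurable_const Cons.IH)
  then show ?case by (simp add: p)
qed


lemma Theta_PiE: "Theta = PiE UNIV (\<lambda>_. {0..1::real})"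
  by (auto simp: Theta_def PiE_def extensional_def)

lemma compact_Theta: "compact Theta"
proof -
  have "compactin (product_topology (\<lambda>_. euclidean) UNIV) (PiE UNIV (\<lambda>_::int^'d. {0..1::real}))"
    by (simp add: compactin_PiE compact_Icc)
  then show ?thesis
    by (simp add: Theta_PiE euclidean_product_topology)
qed

lemma pev_const: "pev [(c,[])] = (\<lambda>_. c)"
  by (auto simp: fun_eq_iff)

lemma pev_coord: "pev [(1,[j])] = (\<lambda>\<theta>. \<theta> j)"
  by (auto simp: fun_eq_iff)

lemma SW_approx:
  fixes f :: "(int^'d::finite \<Rightarrow> real) \<Rightarrow> real"
  assumes "continuous_on Theta f" "e > 0"
  shows "\<exists>ps. \<forall>\<theta>\<in>Theta. \<bar>f \<theta> - pev ps \<theta>\<bar> < e"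
proof -
  interpret function_ring_on "range pev" "Theta :: (int^'d \<Rightarrow> real) set"
  proof
    show "compact (Theta :: (int^'d \<Rightarrow> real) set)" by (rule compact_Theta)
  next
    fix f :: "(int^'d \<Rightarrow> real) \<Rightarrow> real" assume "f \<in> range pev"
    then show "continuous_on Theta f" using cont_pev continuous_on_subset by blast
  next
    fix f g :: "(int^'d \<Rightarrow> real) \<Rightarrow> real" assume "f \<in> range pev" "g \<in> range pev"
    then obtain ps qs where "f = pev ps" "g = pev qs" by blast
    moreover have "pev (ps @ qs) = (\<lambda>x. pev ps x + pev qs x)" "pev (pmul ps qs) = (\<lambda>x. pev ps x * pev qs x)"
      by (auto simp: fun_eq_iff)
    ultimately show "(\<lambda>x. f x + g x) \<in> range pev" "(\<lambda>x. f x * g x) \<in> range pev"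
      by (simp_all only: rangeI flip: \<open>pev (ps @ qs) = _\<close> \<open>pev (pmul ps qs) = _\<close>)
  next
    fix c :: real show "(\<lambda>_. c) \<in> range pev" by (rule range_eqI[where x="[(c,[])]"]) (simp add: fun_eq_iff)
  next
    fix x y :: "int^'d \<Rightarrow> real" assume "x \<noteq> y"
    then obtain j where "x j \<noteq> y j" by blast
    then show "\<exists>f\<in>range pev. f x \<noteq> f y" by (intro bexI[where x="pev [(1,[j])]"] rangeI) (simp only: pev_coord, simp)
  qed
  obtain F where F: "F \<in> UNIV \<rightarrow> range pev" and lim: "uniform_limit Theta F f sequentially"
    using Stone_Weierstrass[OF assms(1)] by (elim bexE) 
  have "\<forall>\<^sub>F n in sequentially. \<forall>x\<in>Theta. dist (F n x) (f x) < e"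
    using lim assms(2) unfolding uniform_limit_iff by blast
  then obtain n where n: "\<forall>x\<in>Theta. dist (F n x) (f x) < e"
    unfolding eventually_sequentially by blast
  obtain ps where ps: "F n = pev ps" using F by blast
  have "\<forall>\<theta>\<in>Theta. \<bar>f \<theta> - pev ps \<theta>\<bar> < e"
  proof
    fix \<theta> :: "int^'d \<Rightarrow> real" assume "\<theta> \<in> Theta"
    then have "dist (F n \<theta>) (f \<theta>) < e" using n by blast
    then show "\<bar>f \<theta> - pev ps \<theta>\<bar> < e" unfolding ps dist_real_def by linarith
  qed
  then show ?thesis by blast
qed


context
  fixes M :: "'a measure" and \<rho> :: "'a set \<Rightarrow> real"
  assumes ca: "\<And>A. range A \<subseteq> sets M \<Longrightarrow> disjoint_family A \<Longrightarrow> (\<lambda>n. \<rho> (A n)) sums \<rho> (\<Union>n. A n)"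
    and emp: "\<rho> {} = 0"
begin

lemma rho_add: "A \<in> sets M \<Longrightarrow> B \<in> sets M \<Longrightarrow> A \<inter> B = {} \<Longrightarrow> \<rho> (A \<union> B) = \<rho> A + \<rho> B"
proof -
  assume A: "A \<in> sets M" and B: "B \<in> sets M" and AB: "A \<inter> B = {}"
  define F where "F n = (if n = 0 then A else if n = Suc 0 then B else {})" for n :: nat
  have "range F \<subseteq> sets M" using A B by (auto simp: F_def)
  moreover have "disjoint_family F" using AB by (auto simp: disjoint_family_on_def F_def)
  ultimately have s: "(\<lambda>n. \<rho> (F n)) sums \<rho> (\<Union>n. F n)" by (rule ca)
  have U: "(\<Union>n. F n) = A \<union> B"
    by (auto simp: F_def split: if_splits)
  have "(\<lambda>n. \<rho> (F n)) sums (\<Sum>n\<in>{0, Suc 0}. \<rho> (F n))"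
    by (rule sums_finite) (auto simp: F_def emp)
  then have "(\<lambda>n. \<rho> (F n)) sums (\<rho> A + \<rho> B)" by (simp add: F_def)
  with s U show ?thesis using sums_unique2 by metis
qed

lemma rho_diff: "A \<in> sets M \<Longrightarrow> B \<in> sets M \<Longrightarrow> B \<subseteq> A \<Longrightarrow> \<rho> (A - B) = \<rho> A - \<rho> B"
proof -
  assume a: "A \<in> sets M" "B \<in> sets M" "B \<subseteq> A"
  have e: "(A - B) \<union> B = A" using a by auto
  have "\<rho> ((A - B) \<union> B) = \<rho> (A - B) + \<rho> B" by (rule rho_add) (use a in auto)
  then show ?thesis using e by simp
qed

lemma rho_split: "A \<in> sets M \<Longrightarrow> B \<in> sets M \<Longrightarrow> \<rho> A = \<rho> (A \<inter> B) + \<rho> (A - B)"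
  using rho_add[of "A \<inter> B" "A - B"] by (simp add: Int_Diff_Un Int_Diff_disjoint)

lemma rho_inc:
  assumes "range A \<subseteq> sets M" "incseq A"
  shows "(\<lambda>n. \<rho> (A n)) \<longlonglongrightarrow> \<rho> (\<Union>n. A n)"
proof -
  let ?D = "disjointed A"
  have D: "range ?D \<subseteq> sets M" using assms(1) by (rule sets.range_disjointed_sets)
  have s: "(\<lambda>n. \<rho> (?D n)) sums \<rho> (\<Union>n. ?D n)"
    by (rule ca[OF D disjoint_family_disjointed])
  have fin: "\<rho> (\<Union>i\<in>{..<n}. ?D i) = (\<Sum>i<n. \<rho> (?D i))" for n
  proof (induction n)
    case 0 then show ?case by (simp add: emp)
  next
    case (Suc n)
    have "(\<Union>i\<in>{..<Suc n}. ?D i) = (\<Union>i\<in>{..<n}. ?D i) \<union> ?D n" by (auto simp: lessThan_Suc)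
    moreover have "(\<Union>i\<in>{..<n}. ?D i) \<inter> ?D n = {}"
    proof -
      have "\<forall>i<n. disjointed A i \<inter> disjointed A n = {}"
        using disjoint_family_disjointed[of A] unfolding disjoint_family_on_def by auto
      then show ?thesis by blast
    qed
    moreover have "(\<Union>i\<in>{..<n}. ?D i) \<in> sets M" using D by auto
    ultimately show ?case using Suc rho_add[of "\<Union>i\<in>{..<n}. ?D i" "?D n"] D by auto
  qed
  have eqA: "(\<Union>i\<in>{..<Suc n}. ?D i) = A n" for n
  proof -
    have "(\<Union>i\<in>{..<Suc n}. ?D i) = (\<Union>i\<in>{..<Suc n}. A i)"
      using finite_UN_disjointed_eq[of A "Suc n"] by (simp add: atLeast0LessThan)
    also have "\<dots> = A n" using assms(2) unfolding incseq_def by (auto simp: less_Suc_eq_le) blast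
    finally show ?thesis .
  qed
  from s have "(\<lambda>n. \<Sum>i<n. \<rho> (?D i)) \<longlonglongrightarrow> \<rho> (\<Union>n. ?D n)" by (simp add: sums_def)
  then have "(\<lambda>n. \<Sum>i<Suc n. \<rho> (?D i)) \<longlonglongrightarrow> \<rho> (\<Union>n. ?D n)" by (rule LIMSEQ_Suc)
  moreover have "(\<Sum>i<Suc n. \<rho> (?D i)) = \<rho> (A n)" for n
    using fin[of "Suc n"] eqA[of n] by simp
  ultimately show ?thesis by (simp add: UN_disjointed_eq del: sum.lessThan_Suc)
qed

lemma rho_dec:
  assumes "range A \<subseteq> sets M" "decseq A"
  shows "(\<lambda>n. \<rho> (A n)) \<longlonglongrightarrow> \<rho> (\<Inter>n. A n)"
proof -
  let ?C = "\<lambda>n. space M - A n"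
  have "range ?C \<subseteq> sets M" using assms(1) by auto
  moreover have "incseq ?C" using assms(2) by (auto simp: incseq_def decseq_def)
  ultimately have "(\<lambda>n. \<rho> (?C n)) \<longlonglongrightarrow> \<rho> (\<Union>n. ?C n)" by (rule rho_inc)
  moreover have "\<rho> (?C n) = \<rho> (space M) - \<rho> (A n)" for n
    using assms(1) by (intro rho_diff) (auto dest: sets.sets_into_space)
  moreover have "(\<Union>n. ?C n) = space M - (\<Inter>n. A n)" by blast
  moreover have "(\<Inter>n. A n) \<subseteq> space M" using sets.sets_into_space[of "A 0" M] assms(1) by auto
  then have "\<rho> (space M - (\<Inter>n. A n)) = \<rho> (space M) - \<rho> (\<Inter>n. A n)"
    using assms(1) by (intro rho_diff) auto
  ultimately have "(\<lambda>n. \<rho> (space M) - \<rho> (A n)) \<longlonglongrightarrow> \<rho> (space M) - \<rho> (\<Inter>n. A n)" by simp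
  from tendsto_diff[OF tendsto_const[of "\<rho> (space M)"] this] show ?thesis by simp
qed


lemma rho_bdd: "bdd_above (\<rho> ` sets M)"
proof (rule ccontr)
  assume nb: "\<not> bdd_above (\<rho> ` sets M)"
  define U where "U A \<longleftrightarrow> A \<in> sets M \<and> \<not> bdd_above (\<rho> ` {B\<in>sets M. B \<subseteq> A})" for A
  have U0: "U (space M)"
  proof -
    have "{B\<in>sets M. B \<subseteq> space M} = sets M" using sets.sets_into_space by auto
    then show ?thesis using nb by (simp add: U_def)
  qed
  have step: "\<exists>p. U (fst p) \<and> snd p \<in> sets M \<and> snd p \<inter> fst p = {} \<and> fst p \<subseteq> A \<and> snd p \<subseteq> A \<and> 1 \<le> \<bar>\<rho> (snd p)\<bar>"
    if UA: "U A" for A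
  proof -
    have A: "A \<in> sets M" using UA by (simp add: U_def)
    from UA have "\<not> bdd_above (\<rho> ` {B\<in>sets M. B \<subseteq> A})" by (simp add: U_def)
    then have "\<not> (\<forall>x\<in>\<rho> ` {B\<in>sets M. B \<subseteq> A}. x \<le> \<bar>\<rho> A\<bar> + 1)"
      unfolding bdd_above_def by blast
    then obtain C where C: "C \<in> sets M" "C \<subseteq> A" "\<rho> C > \<bar>\<rho> A\<bar> + 1"
      by (auto simp: not_le)
    have AC: "A - C \<in> sets M" using A C by auto
    have rAC: "\<rho> (A - C) = \<rho> A - \<rho> C" using rho_diff[OF A C(1,2)] .
    have "U C \<or> U (A - C)"
    proof (rule ccontr)
      assume nU: "\<not> (U C \<or> U (A - C))"
      then have "bdd_above (\<rho> ` {B\<in>sets M. B \<subseteq> C})" using C(1) by (simp add: U_def)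
      then obtain s1 where s1': "\<forall>x\<in>\<rho> ` {B\<in>sets M. B \<subseteq> C}. x \<le> s1" unfolding bdd_above_def by blast
      have s1: "\<And>B. B \<in> sets M \<Longrightarrow> B \<subseteq> C \<Longrightarrow> \<rho> B \<le> s1" using s1' by blast
      have "bdd_above (\<rho> ` {B\<in>sets M. B \<subseteq> A - C})" using AC nU by (simp add: U_def)
      then obtain s2 where s2': "\<forall>x\<in>\<rho> ` {B\<in>sets M. B \<subseteq> A - C}. x \<le> s2" unfolding bdd_above_def by blast
      have s2: "\<And>B. B \<in> sets M \<Longrightarrow> B \<subseteq> A - C \<Longrightarrow> \<rho> B \<le> s2" using s2' by blast
      have "\<rho> B \<le> s1 + s2" if "B \<in> sets M" "B \<subseteq> A" for B
      proof -
        have "\<rho> B = \<rho> (B \<inter> C) + \<rho> (B - C)" using rho_split[OF that(1) C(1)] .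
        moreover have "\<rho> (B \<inter> C) \<le> s1" using that C by (intro s1) auto
        moreover have "\<rho> (B - C) \<le> s2" using that C by (intro s2) auto
        ultimately show ?thesis by simp
      qed
      then have "bdd_above (\<rho> ` {B\<in>sets M. B \<subseteq> A})" unfolding bdd_above_def by blast
      with UA show False by (simp add: U_def)
    qed
    then show ?thesis
    proof
      assume "U C"
      then show ?thesis using AC C rAC by (intro exI[of _ "(C, A - C)"]) auto
    next
      assume "U (A - C)"
      then show ?thesis using AC C rAC by (intro exI[of _ "(A - C, C)"]) auto
    qed
  qed
  then obtain nxt where nxt: "\<And>A. U A \<Longrightarrow> U (fst (nxt A)) \<and> snd (nxt A) \<in> sets M \<and> snd (nxt A) \<inter> fst (nxt A) = {}
      \<and> fst (nxt A) \<subseteq> A \<and> snd (nxt A) \<subseteq> A \<and> 1 \<le> \<bar>\<rho> (snd (nxt A))\<bar>"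
    by (metis (no_types))
  define S where "S n = rec_nat (space M) (\<lambda>_ A. fst (nxt A)) n" for n
  have S0: "S 0 = space M" and SS: "S (Suc n) = fst (nxt (S n))" for n by (simp_all add: S_def)
  have US: "U (S n)" for n
  proof (induction n)
    case 0 show ?case using U0 by (simp add: S0)
  next
    case (Suc n) show ?case unfolding SS using nxt[OF Suc] by blast
  qed
  define E where "E n = snd (nxt (S n))" for n
  have Esets: "E n \<in> sets M" for n using nxt[OF US[of n]] by (simp add: E_def)
  have Ebig: "1 \<le> \<bar>\<rho> (E n)\<bar>" for n using nxt[OF US[of n]] by (simp add: E_def)
  have Edis: "E n \<inter> S (Suc n) = {}" for n using nxt[OF US[of n]] by (simp add: E_def SS)
  have ES: "E n \<subseteq> S n" for n using nxt[OF US[of n]] by (simp add: E_def)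
  have Sdec: "S (Suc n) \<subseteq> S n" for n using nxt[OF US[of n]] by (simp add: SS)
  have Smono: "n \<le> m \<Longrightarrow> S m \<subseteq> S n" for n m
    by (induction m rule: dec_induct) (use Sdec in auto)
  have disj: "disjoint_family E"
    unfolding disjoint_family_on_def
  proof (intro ballI impI)
    fix n m :: nat assume "n \<noteq> m"
    show "E n \<inter> E m = {}"
    proof (cases "n < m")
      case True
      then have "E m \<subseteq> S (Suc n)" using ES[of m] Smono[of "Suc n" m] by auto
      then show ?thesis using Edis[of n] by auto
    next
      case False
      then have "m < n" using \<open>n \<noteq> m\<close> by simp
      then have "E n \<subseteq> S (Suc m)" using ES[of n] Smono[of "Suc m" n] by auto
      then show ?thesis using Edis[of m] by auto
    qed
  qed
  have "(\<lambda>n. \<rho> (E n)) sums \<rho> (\<Union>n. E n)" using ca[OF _ disj] Esets by auto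
  then have "(\<lambda>n. \<rho> (E n)) \<longlonglongrightarrow> 0" using summable_LIMSEQ_zero sums_summable by blast
  then have "\<exists>N. \<forall>n\<ge>N. dist (\<rho> (E n)) 0 < 1" unfolding lim_sequentially by simp
  then obtain n where "\<bar>\<rho> (E n)\<bar> < 1" by (auto simp: dist_real_def)
  with Ebig[of n] show False by simp
qed

lemma rho_hahn: "\<exists>Y\<in>sets M. (\<forall>X\<in>sets M. X \<subseteq> Y \<longrightarrow> 0 \<le> \<rho> X) \<and> (\<forall>X\<in>sets M. X \<inter> Y = {} \<longrightarrow> \<rho> X \<le> 0)"
proof -
  define d where "d = \<rho>"
  have [intro]: "bdd_above (d`sets M)" using rho_bdd by (simp add: d_def)
  define \<gamma> where "\<gamma> = (SUP X\<in>sets M. d X)"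
  have le_\<gamma>[intro]: "X \<in> sets M \<Longrightarrow> d X \<le> \<gamma>" for X
    by (auto simp: \<gamma>_def intro!: cSUP_upper)
  have "\<exists>X\<in>sets M. \<gamma> - 1 / 2^n < d X" for n
    unfolding \<gamma>_def by (intro less_cSUP_iff[THEN iffD1]) auto
  then have "\<exists>f. \<forall>n. f n \<in> sets M \<and> d (f n) > \<gamma> - 1 / 2^n"
    by metis
  then obtain E where [measurable]: "E n \<in> sets M" and E: "d (E n) > \<gamma> - 1 / 2^n" for n
    by auto
  define F where "F m n = (if m \<le> n then \<Inter>i\<in>{m..n}. E i else space M)" for m n
  have [measurable]: "m \<le> n \<Longrightarrow> F m n \<in> sets M" for m n
    by (auto simp: F_def)
  have 1: "\<gamma> - 2 / 2 ^ m + 1 / 2 ^ n \<le> d (F m n)" if "m \<le> n" for m n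
    using that
  proof (induct rule: dec_induct)
    case base with E[of m] show ?case
      by (simp add: F_def field_simps)
  next
    case (step i)
    have F_Suc: "F m (Suc i) = F m i \<inter> E (Suc i)"
      using \<open>m \<le> i\<close> by (auto simp: F_def le_Suc_eq)
    have Fi: "F m i \<in> sets M" using \<open>m \<le> i\<close> by simp
    have ES: "E (Suc i) \<in> sets M" by simp
    have "\<gamma> + (\<gamma> - 2 / 2^m + 1 / 2 ^ Suc i) \<le> (\<gamma> - 1 / 2^Suc i) + (\<gamma> - 2 / 2^m + 1 / 2^i)"
      by (simp add: field_simps)
    also have "\<dots> \<le> d (E (Suc i)) + d (F m i)"
      using E[of "Suc i"] by (intro add_mono step) auto
    also have "\<dots> = d (E (Suc i)) + d (F m i - E (Suc i)) + d (F m (Suc i))"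
      using rho_split[OF Fi ES] F_Suc by (simp add: d_def)
    also have "\<dots> = d (E (Suc i) \<union> F m i) + d (F m (Suc i))"
    proof -
      have "E (Suc i) \<union> F m i = E (Suc i) \<union> (F m i - E (Suc i))" by auto
      then have "d (E (Suc i) \<union> F m i) = d (E (Suc i)) + d (F m i - E (Suc i))"
        using rho_add[OF ES, of "F m i - E (Suc i)"] Fi by (auto simp: d_def)
      then show ?thesis by simp
    qed
    also have "\<dots> \<le> \<gamma> + d (F m (Suc i))"
      using \<open>m \<le> i\<close> Fi by auto
    finally show ?case
      by auto
  qed
  define F' where "F' m = (\<Inter>i\<in>{m..}. E i)" for m
  have F'_eq: "F' m = (\<Inter>i. F m (i + m))" for m
    by (fastforce simp: le_iff_add[of m] F'_def F_def)
  have [measurable]: "F' m \<in> sets M" for m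
    by (auto simp: F'_def)
  have \<gamma>_le: "\<gamma> - 0 \<le> d (\<Union>m. F' m)"
  proof (rule LIMSEQ_le)
    show "(\<lambda>n. \<gamma> - 2 / 2 ^ n) \<longlonglongrightarrow> \<gamma> - 0"
      by (intro tendsto_intros LIMSEQ_divide_realpow_zero) auto
    have "incseq F'"
      by (auto simp: incseq_def F'_def)
    then show "(\<lambda>m. d (F' m)) \<longlonglongrightarrow> d (\<Union>m. F' m)"
      unfolding d_def by (intro rho_inc) auto
    have "\<gamma> - 2 / 2 ^ m + 0 \<le> d (F' m)" for m
    proof (rule LIMSEQ_le)
      have *: "decseq (\<lambda>n. F m (n + m))"
        by (auto simp: decseq_def F_def)
      have "(\<lambda>n. d (F m (n + m))) \<longlonglongrightarrow> d (\<Inter>n. F m (n + m))"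
        unfolding d_def by (rule rho_dec[OF _ *]) auto
      then show "(\<lambda>n. d (F m n)) \<longlonglongrightarrow> d (F' m)"
        unfolding F'_eq by (rule LIMSEQ_offset[where k=m])
      show "(\<lambda>n. \<gamma> - 2 / 2 ^ m + 1 / 2 ^ n) \<longlonglongrightarrow> \<gamma> - 2 / 2 ^ m + 0"
        by (intro tendsto_add LIMSEQ_divide_realpow_zero tendsto_const) auto
      show "\<exists>N. \<forall>n\<ge>N. \<gamma> - 2 / 2 ^ m + 1 / 2 ^ n \<le> d (F m n)"
        using 1[of m] by (intro exI[of _ m]) auto
    qed
    then show "\<exists>N. \<forall>n\<ge>N. \<gamma> - 2 / 2 ^ n \<le> d (F' n)"
      by auto
  qed
  have Ym: "(\<Union>m. F' m) \<in> sets M" by measurable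
  show ?thesis
  proof (intro bexI[OF _ Ym] conjI ballI impI)
    fix X assume X1: "X \<in> sets M" and X: "X \<subseteq> (\<Union>m. F' m)"
    have "d (\<Union>m. F' m) - d X = d ((\<Union>m. F' m) - X)"
      using rho_diff[OF Ym X1 X] by (simp add: d_def)
    also have "\<dots> \<le> \<gamma>"
      using Ym X1 by auto
    finally have "0 \<le> d X"
      using \<gamma>_le by auto
    then show "0 \<le> \<rho> X" by (simp add: d_def)
  next
    fix X assume X1: "X \<in> sets M" and X: "X \<inter> (\<Union>m. F' m) = {}"
    then have "d (\<Union>m. F' m) + d X = d (X \<union> (\<Union>m. F' m))"
      using rho_add[OF Ym X1] by (simp add: d_def Int_commute Un_commute)
    also have "\<dots> \<le> \<gamma>"
      using Ym X1 by auto
    finally have "d X \<le> 0"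
      using \<gamma>_le by auto
    then show "\<rho> X \<le> 0" by (simp add: d_def)
  qed
qed

end


lemma mk_measure:
  fixes p :: "'a set \<Rightarrow> real" and M :: "'a measure"
  assumes nn: "\<And>A. A \<in> sets M \<Longrightarrow> 0 \<le> p A" and e: "p {} = 0"
    and ca: "\<And>A. range A \<subseteq> sets M \<Longrightarrow> disjoint_family A \<Longrightarrow> (\<lambda>n. p (A n)) sums p (\<Union>n. A n)"
  defines "N \<equiv> measure_of (space M) (sets M) (\<lambda>A. ennreal (p A))"
  shows "finite_measure N" "sets N = sets M" "\<And>A. A \<in> sets M \<Longrightarrow> measure N A = p A"
proof -
  have em: "emeasure N A = ennreal (p A)" if "A \<in> sets M" for A
    unfolding N_def
  proof (rule emeasure_measure_of_sigma[OF sets.sigma_algebra_axioms _ _ that])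
    show "positive (sets M) (\<lambda>A. ennreal (p A))" by (simp add: positive_def e)
    show "countably_additive (sets M) (\<lambda>A. ennreal (p A))"
      unfolding countably_additive_def
    proof (intro allI impI)
      fix A :: "nat \<Rightarrow> 'a set" assume A: "range A \<subseteq> sets M" "disjoint_family A"
      show "(\<Sum>i. ennreal (p (A i))) = ennreal (p (\<Union> (range A)))"
        by (rule suminf_ennreal_eq) (use nn A ca[OF A] in auto)
    qed
  qed
  show sN: "sets N = sets M" unfolding N_def by simp
  have spN: "space N = space M" unfolding N_def by simp
  show "finite_measure N"
    by (rule finite_measureI) (simp add: spN em)
  show "measure N A = p A" if "A \<in> sets M" for A
    using em[OF that] nn[OF that] by (simp add: measure_def)
qed

lemma jordan:
  fixes \<rho> :: "'a set \<Rightarrow> real" and M :: "'a measure"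
  assumes ca: "\<And>A. range A \<subseteq> sets M \<Longrightarrow> disjoint_family A \<Longrightarrow> (\<lambda>n. \<rho> (A n)) sums \<rho> (\<Union>n. A n)"
    and emp: "\<rho> {} = 0"
  shows "\<exists>P N. finite_measure P \<and> finite_measure N \<and> sets P = sets M \<and> sets N = sets M \<and>
     (\<forall>A\<in>sets M. \<rho> A = measure P A - measure N A)"
proof -
  obtain Y where Y: "Y \<in> sets M" and pos': "\<forall>X\<in>sets M. X \<subseteq> Y \<longrightarrow> 0 \<le> \<rho> X"
    and neg': "\<forall>X\<in>sets M. X \<inter> Y = {} \<longrightarrow> \<rho> X \<le> 0"
  proof -
    have "\<exists>Y\<in>sets M. (\<forall>X\<in>sets M. X \<subseteq> Y \<longrightarrow> 0 \<le> \<rho> X) \<and> (\<forall>X\<in>sets M. X \<inter> Y = {} \<longrightarrow> \<rho> X \<le> 0)"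
      by (rule rho_hahn[where M=M and \<rho>=\<rho>]) (rule ca, assumption+, rule emp)
    then show ?thesis using that by (elim bexE conjE)
  qed
  have pos: "\<And>X. X \<in> sets M \<Longrightarrow> X \<subseteq> Y \<Longrightarrow> 0 \<le> \<rho> X" using pos' by blast
  have neg: "\<And>X. X \<in> sets M \<Longrightarrow> X \<inter> Y = {} \<Longrightarrow> \<rho> X \<le> 0" using neg' by blast
  define p where "p A = \<rho> (A \<inter> Y)" for A
  define q where "q A = - \<rho> (A - Y)" for A
  have cap: "(\<lambda>n. p (A n)) sums p (\<Union>n. A n)" if "range A \<subseteq> sets M" "disjoint_family A" for A
  proof -
    have "range (\<lambda>n. A n \<inter> Y) \<subseteq> sets M" using that Y by auto
    moreover have "disjoint_family (\<lambda>n. A n \<inter> Y)" using that(2) by (auto simp: disjoint_family_on_def)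
    ultimately have "(\<lambda>n. \<rho> (A n \<inter> Y)) sums \<rho> (\<Union>n. A n \<inter> Y)" by (rule ca)
    moreover have "(\<Union>n. A n \<inter> Y) = (\<Union>n. A n) \<inter> Y" by auto
    ultimately show ?thesis by (simp add: p_def)
  qed
  have caq: "(\<lambda>n. q (A n)) sums q (\<Union>n. A n)" if "range A \<subseteq> sets M" "disjoint_family A" for A
  proof -
    have "range (\<lambda>n. A n - Y) \<subseteq> sets M" using that Y by auto
    moreover have "disjoint_family (\<lambda>n. A n - Y)" using that(2) by (auto simp: disjoint_family_on_def)
    ultimately have "(\<lambda>n. \<rho> (A n - Y)) sums \<rho> (\<Union>n. A n - Y)" by (rule ca)
    moreover have "(\<Union>n. A n - Y) = (\<Union>n. A n) - Y" by auto
    ultimately show ?thesis unfolding q_def by (simp add: sums_minus)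
  qed
  have nnp: "0 \<le> p A" if "A \<in> sets M" for A using pos[of "A \<inter> Y"] that Y by (auto simp: p_def)
  have nnq: "0 \<le> q A" if "A \<in> sets M" for A using neg[of "A - Y"] that Y by (auto simp: q_def)
  have pe: "p {} = 0" by (simp add: p_def emp)
  have qe: "q {} = 0" by (simp add: q_def emp)
  have P1: "finite_measure (measure_of (space M) (sets M) (\<lambda>A. ennreal (p A)))"
    by (rule mk_measure(1)) (erule nnp, rule pe, erule (1) cap)
  have N1: "finite_measure (measure_of (space M) (sets M) (\<lambda>A. ennreal (q A)))"
    by (rule mk_measure(1)) (erule nnq, rule qe, erule (1) caq)
  have P2: "sets (measure_of (space M) (sets M) (\<lambda>A. ennreal (p A))) = sets M" by simp
  have N2: "sets (measure_of (space M) (sets M) (\<lambda>A. ennreal (q A))) = sets M" by simp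
  have P3: "measure (measure_of (space M) (sets M) (\<lambda>A. ennreal (p A))) A = p A" if "A \<in> sets M" for A
    by (rule mk_measure(3)) (erule nnp, rule pe, erule (1) cap, rule that)
  have N3: "measure (measure_of (space M) (sets M) (\<lambda>A. ennreal (q A))) A = q A" if "A \<in> sets M" for A
    by (rule mk_measure(3)) (erule nnq, rule qe, erule (1) caq, rule that)
  have split: "\<rho> A = p A - q A" if A: "A \<in> sets M" for A
  proof -
    have "\<rho> A = \<rho> (A \<inter> Y) + \<rho> (A - Y)"
      by (rule rho_split[where M=M and \<rho>=\<rho>]) (rule ca, assumption+, rule emp, rule A, rule Y)
    then show ?thesis by (simp add: p_def q_def)
  qed
  show ?thesis
  proof (rule exI[of _ "measure_of (space M) (sets M) (\<lambda>A. ennreal (p A))"],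
      rule exI[of _ "measure_of (space M) (sets M) (\<lambda>A. ennreal (q A))"], intro conjI ballI)
    fix A assume A: "A \<in> sets M"
    show "\<rho> A = measure (measure_of (space M) (sets M) (\<lambda>A. ennreal (p A))) A -
        measure (measure_of (space M) (sets M) (\<lambda>A. ennreal (q A))) A"
      unfolding P3[OF A] N3[OF A] by (rule split[OF A])
  qed (rule P1, rule N1, rule P2, rule N2)
qed


definition lsetv :: "(real \<times> 'a measure) list \<Rightarrow> 'a set \<Rightarrow> real" where
  "lsetv L A = sum_list (map (\<lambda>(c,m). c * measure m A) L)"
definition lint :: "(real \<times> 'a measure) list \<Rightarrow> ('a \<Rightarrow> real) \<Rightarrow> real" where
  "lint L f = sum_list (map (\<lambda>(c,m). c * integral\<^sup>L m f) L)"

lemma lsetv_simps[simp]: "lsetv [] A = 0" "lsetv ((c,m)#L) A = c * measure m A + lsetv L A"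
  by (simp_all add: lsetv_def)
lemma lint_simps[simp]: "lint [] f = 0" "lint ((c,m)#L) f = c * integral\<^sup>L m f + lint L f"
  by (simp_all add: lint_def)
lemma lsetv_append[simp]: "lsetv (L1 @ L2) A = lsetv L1 A + lsetv L2 A" by (simp add: lsetv_def)
lemma lint_append[simp]: "lint (L1 @ L2) f = lint L1 f + lint L2 f" by (simp add: lint_def)

lemma floor_approx:
  fixes k y :: real assumes "k > 0"
  shows "\<bar>real_of_int \<lfloor>k * y\<rfloor> / k - y\<bar> \<le> 1 / k"
proof -
  have a: "real_of_int \<lfloor>k * y\<rfloor> \<le> k * y" by (rule of_int_floor_le)
  have b: "k * y - 1 < real_of_int \<lfloor>k * y\<rfloor>" by linarith
  have "real_of_int \<lfloor>k * y\<rfloor> / k \<le> y" using a assms by (simp add: divide_le_eq mult.commute)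
  moreover have "y - 1 / k \<le> real_of_int \<lfloor>k * y\<rfloor> / k"
  proof -
    have "(k * y - 1) / k \<le> real_of_int \<lfloor>k * y\<rfloor> / k" by (rule divide_right_mono) (use b assms in auto)
    moreover have "(k * y - 1) / k = y - 1 / k" using assms by (simp add: field_simps)
    ultimately show ?thesis by simp
  qed
  ultimately show ?thesis by (simp add: abs_le_iff)
qed

lemma simple_integral_floor:
  fixes f :: "'a \<Rightarrow> real" and m M :: "'a measure"
  assumes fm: "finite_measure m" and sm: "sets m = sets M"
    and f[measurable]: "f \<in> borel_measurable M" and K: "\<forall>x\<in>space M. \<bar>f x\<bar> \<le> K"
    and k: "k > 0"
  defines "N \<equiv> \<lceil>k * K\<rceil> + 1"
  shows "integral\<^sup>L m (\<lambda>x. real_of_int \<lfloor>k * f x\<rfloor> / k)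
        = (\<Sum>z\<in>{-N..N}. (real_of_int z / k) * measure m {x\<in>space M. \<lfloor>k * f x\<rfloor> = z})"
proof -
  interpret finite_measure m by (rule fm)
  have sp: "space m = space M" using sm by (rule sets_eq_imp_space_eq)
  have Am[measurable]: "{x\<in>space M. \<lfloor>k * f x\<rfloor> = z} \<in> sets M" for z by measurable
  have inZ: "\<lfloor>k * f x\<rfloor> \<in> {-N..N}" if "x \<in> space M" for x
  proof -
    have "\<bar>k * f x\<bar> \<le> k * K" using K that k by (simp add: abs_mult mult_left_mono)
    then have "- (k*K) \<le> k * f x" "k * f x \<le> k * K" by (simp_all add: abs_le_iff)
    then show ?thesis unfolding N_def by (simp, linarith)
  qed
  have eq: "real_of_int \<lfloor>k * f x\<rfloor> / k = (\<Sum>z\<in>{-N..N}. (real_of_int z / k) * indicator {x\<in>space M. \<lfloor>k * f x\<rfloor> = z} x)"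
    if "x \<in> space M" for x
  proof -
    have "(\<Sum>z\<in>{-N..N}. (real_of_int z / k) * indicator {x\<in>space M. \<lfloor>k * f x\<rfloor> = z} x)
        = (\<Sum>z\<in>{-N..N}. if \<lfloor>k * f x\<rfloor> = z then real_of_int z / k else 0)"
      using that by (intro sum.cong) (auto simp: indicator_def)
    also have "\<dots> = real_of_int \<lfloor>k * f x\<rfloor> / k" using inZ[OF that] by (simp add: sum.delta)
    finally show ?thesis by simp
  qed
  have "integral\<^sup>L m (\<lambda>x. real_of_int \<lfloor>k * f x\<rfloor> / k)
      = integral\<^sup>L m (\<lambda>x. \<Sum>z\<in>{-N..N}. (real_of_int z / k) * indicator {x\<in>space M. \<lfloor>k * f x\<rfloor> = z} x)"
    by (rule Bochner_Integration.integral_cong[OF refl]) (simp add: sp eq)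
  also have "\<dots> = (\<Sum>z\<in>{-N..N}. integral\<^sup>L m (\<lambda>x. (real_of_int z / k) * indicator {x\<in>space M. \<lfloor>k * f x\<rfloor> = z} x))"
  proof (rule Bochner_Integration.integral_sum)
    fix z assume "z \<in> {-N..N}"
    have "{x\<in>space M. \<lfloor>k * f x\<rfloor> = z} \<in> sets m" using Am sm by simp
    then show "integrable m (\<lambda>x. (real_of_int z / k) * indicator {x\<in>space M. \<lfloor>k * f x\<rfloor> = z} x)"
      by (intro integrable_mult_right integrable_real_indicator) (auto simp: emeasure_eq_measure)
  qed
  also have "\<dots> = (\<Sum>z\<in>{-N..N}. (real_of_int z / k) * measure m {x\<in>space M. \<lfloor>k * f x\<rfloor> = z})"
  proof (rule sum.cong[OF refl])
    fix z
    have "{x\<in>space M. \<lfloor>k * f x\<rfloor> = z} \<inter> space m = {x\<in>space M. \<lfloor>k * f x\<rfloor> = z}" using sp by auto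
    then show "integral\<^sup>L m (\<lambda>x. (real_of_int z / k) * indicator {x\<in>space M. \<lfloor>k * f x\<rfloor> = z} x)
        = (real_of_int z / k) * measure m {x\<in>space M. \<lfloor>k * f x\<rfloor> = z}"
      by simp
  qed
  finally show ?thesis .
qed


lemma lin_zero:
  fixes f :: "'a \<Rightarrow> real" and M :: "'a measure"
  assumes ok: "\<forall>(c,m)\<in>set L. finite_measure m \<and> sets m = sets M"
    and z: "\<forall>A\<in>sets M. lsetv L A = 0"
    and f[measurable]: "f \<in> borel_measurable M" and K: "\<forall>x\<in>space M. \<bar>f x\<bar> \<le> K"
  shows "lint L f = 0"
proof -
  define s where "s j x = real_of_int \<lfloor>real (Suc j) * f x\<rfloor> / real (Suc j)" for j x
  have sm[measurable]: "s j \<in> borel_measurable M" for j unfolding s_def by measurable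
  have sbound: "\<bar>s j x - f x\<bar> \<le> 1 / real (Suc j)" for j x
    unfolding s_def by (rule floor_approx) simp
  have conv: "(\<lambda>j. integral\<^sup>L m (s j)) \<longlonglongrightarrow> integral\<^sup>L m f" if fm: "finite_measure m" and smM: "sets m = sets M" for m
  proof -
    interpret finite_measure m by (rule fm)
    have sp: "space m = space M" using smM by (rule sets_eq_imp_space_eq)
    have meq: "borel_measurable m = borel_measurable M" by (rule measurable_cong_sets[OF smM refl])
    show ?thesis
    proof (rule integral_dominated_convergence[where w="\<lambda>_. K + 1"])
      show "f \<in> borel_measurable m" unfolding meq by (rule f)
      show "s i \<in> borel_measurable m" for i unfolding meq by (rule sm)
      show "integrable m (\<lambda>_. K + 1)" by simp
      show "AE x in m. (\<lambda>i. s i x) \<longlonglongrightarrow> f x"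
      proof (rule AE_I2)
        fix x
        have "(\<lambda>i. s i x - f x) \<longlonglongrightarrow> 0"
        proof (rule Lim_null_comparison)
          show "\<forall>\<^sub>F i in sequentially. norm (s i x - f x) \<le> 1 / real (Suc i)"
            using sbound by simp
          show "(\<lambda>i. 1 / real (Suc i)) \<longlonglongrightarrow> 0" by (rule LIMSEQ_Suc[OF lim_const_over_n])
        qed
        then show "(\<lambda>i. s i x) \<longlonglongrightarrow> f x" by (simp add: LIM_zero_iff)
      qed
      show "AE x in m. norm (s i x) \<le> K + 1" for i
      proof (rule AE_I2)
        fix x assume "x \<in> space m"
        then have "\<bar>f x\<bar> \<le> K" using K sp by auto
        moreover have "1 / real (Suc i) \<le> 1" by simp
        ultimately have "\<bar>s i x - f x\<bar> \<le> 1" "\<bar>f x\<bar> \<le> K" using sbound[of i x] by linarith+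
        then show "norm (s i x) \<le> K + 1" by (simp add: abs_le_iff)
      qed
    qed
  qed
  have lim: "(\<lambda>j. lint L' (s j)) \<longlonglongrightarrow> lint L' f" if "set L' \<subseteq> set L" for L'
    using that
  proof (induction L')
    case Nil then show ?case by simp
  next
    case (Cons p L')
    obtain c m where p: "p = (c,m)" by (cases p)
    have "finite_measure m" "sets m = sets M" using ok Cons.prems p by auto
    then have "(\<lambda>j. c * integral\<^sup>L m (s j) + lint L' (s j)) \<longlonglongrightarrow> c * integral\<^sup>L m f + lint L' f"
      using Cons by (intro tendsto_add tendsto_mult_left conv) auto
    then show ?case by (simp add: p)
  qed
  have zero: "lint L (s j) = 0" for j
  proof -
    define k where "k = real (Suc j)"
    have k: "k > 0" by (simp add: k_def)
    define N where "N = \<lceil>k * K\<rceil> + 1"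
    define A where "A z = {x\<in>space M. \<lfloor>k * f x\<rfloor> = z}" for z
    have Am: "A z \<in> sets M" for z unfolding A_def by measurable
    have rep: "lint L' (s j) = (\<Sum>z\<in>{-N..N}. (real_of_int z / k) * lsetv L' (A z))" if "set L' \<subseteq> set L" for L'
      using that
    proof (induction L')
      case Nil then show ?case by simp
    next
      case (Cons p L')
      obtain c m where p: "p = (c,m)" by (cases p)
      have "finite_measure m" "sets m = sets M" using ok Cons.prems p by auto
      then have "integral\<^sup>L m (s j) = (\<Sum>z\<in>{-N..N}. (real_of_int z / k) * measure m (A z))"
        unfolding s_def A_def N_def k_def by (rule simple_integral_floor[OF _ _ f K]) simp
      then have "lint (p # L') (s j) = c * (\<Sum>z\<in>{-N..N}. (real_of_int z / k) * measure m (A z))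
          + (\<Sum>z\<in>{-N..N}. (real_of_int z / k) * lsetv L' (A z))"
        using Cons by (simp add: p)
      also have "\<dots> = (\<Sum>z\<in>{-N..N}. (real_of_int z / k) * lsetv (p # L') (A z))"
        by (simp add: p sum_distrib_left sum.distrib[symmetric] algebra_simps)
      finally show ?case .
    qed
    have "lint L (s j) = (\<Sum>z\<in>{-N..N}. (real_of_int z / k) * lsetv L (A z))" by (rule rep) simp
    also have "\<dots> = 0" using z Am by simp
    finally show ?thesis .
  qed
  have "(\<lambda>j. lint L (s j)) \<longlonglongrightarrow> lint L f" by (rule lim) simp
  moreover have "(\<lambda>j. lint L (s j)) \<longlonglongrightarrow> 0" using zero by simp
  ultimately show ?thesis using LIMSEQ_unique by blast
qed


definition cmrep where
  "cmrep \<nu> \<mu>1 \<mu>2 \<mu>3 \<mu>4 \<longleftrightarrow> (\<forall>\<mu>\<in>{\<mu>1,\<mu>2,\<mu>3,\<mu>4}. finite_measure \<mu> \<and> sets \<mu> = sets ThetaM) \<and>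
      (\<forall>A\<in>sets ThetaM. \<nu> A = complex_of_real (measure \<mu>1 A - measure \<mu>2 A)
                                + \<i> * complex_of_real (measure \<mu>3 A - measure \<mu>4 A))"

definition cmexpr where
  "cmexpr \<mu>1 \<mu>2 \<mu>3 \<mu>4 f = complex_of_real ((\<integral>x. f x \<partial>\<mu>1) - (\<integral>x. f x \<partial>\<mu>2))
          + \<i> * complex_of_real ((\<integral>x. f x \<partial>\<mu>3) - (\<integral>x. f x \<partial>\<mu>4))"

definition bm :: "((int^'d::finite \<Rightarrow> real) \<Rightarrow> real) \<Rightarrow> bool" where
  "bm f \<longleftrightarrow> f \<in> borel_measurable ThetaM \<and> (\<exists>K. \<forall>x\<in>Theta. \<bar>f x\<bar> \<le> K)"

definition negL :: "(real \<times> 'a measure) list \<Rightarrow> (real \<times> 'a measure) list" where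
  "negL L = map (\<lambda>(c,m). (-c, m)) L"

lemma negL_simps[simp]: "lsetv (negL L) A = - lsetv L A" "lint (negL L) f = - lint L f"
  by (induction L) (auto simp: negL_def)

lemma set_negL: "(c,m) \<in> set (negL L) \<Longrightarrow> \<exists>c'. (c',m) \<in> set L"
  by (auto simp: negL_def)

lemma cmexpr_Re: "Re (cmexpr \<mu>1 \<mu>2 \<mu>3 \<mu>4 f) = (\<integral>x. f x \<partial>\<mu>1) - (\<integral>x. f x \<partial>\<mu>2)"
  and cmexpr_Im: "Im (cmexpr \<mu>1 \<mu>2 \<mu>3 \<mu>4 f) = (\<integral>x. f x \<partial>\<mu>3) - (\<integral>x. f x \<partial>\<mu>4)"
  by (simp_all add: cmexpr_def)

lemma cmrep_Re: "cmrep \<nu> \<mu>1 \<mu>2 \<mu>3 \<mu>4 \<Longrightarrow> A \<in> sets ThetaM \<Longrightarrow> Re (\<nu> A) = measure \<mu>1 A - measure \<mu>2 A"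
  and cmrep_Im: "cmrep \<nu> \<mu>1 \<mu>2 \<mu>3 \<mu>4 \<Longrightarrow> A \<in> sets ThetaM \<Longrightarrow> Im (\<nu> A) = measure \<mu>3 A - measure \<mu>4 A"
  by (auto simp: cmrep_def)

lemma cm_rep_exists:
  assumes "complex_measure \<nu>"
  shows "\<exists>\<mu>1 \<mu>2 \<mu>3 \<mu>4. cmrep \<nu> \<mu>1 \<mu>2 \<mu>3 \<mu>4"
proof -
  have ca: "(\<lambda>n. \<nu> (A n)) sums \<nu> (\<Union>n. A n)" if "range A \<subseteq> sets ThetaM" "disjoint_family A" for A
    using assms that unfolding complex_measure_def by blast
  have e: "\<nu> {} = 0" using assms unfolding complex_measure_def by blast
  have "\<exists>P N. finite_measure P \<and> finite_measure N \<and> sets P = sets ThetaM \<and> sets N = sets ThetaM \<and>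
     (\<forall>A\<in>sets ThetaM. Re (\<nu> A) = measure P A - measure N A)"
  proof (rule jordan)
    show "(\<lambda>n. Re (\<nu> (A n))) sums Re (\<nu> (\<Union>n. A n))" if "range A \<subseteq> sets ThetaM" "disjoint_family A" for A
      using ca[OF that] by (simp add: sums_complex_iff)
  qed (simp add: e)
  then obtain P1 N1 where 1: "finite_measure P1" "finite_measure N1" "sets P1 = sets ThetaM" "sets N1 = sets ThetaM"
     "\<forall>A\<in>sets ThetaM. Re (\<nu> A) = measure P1 A - measure N1 A" by blast
  have "\<exists>P N. finite_measure P \<and> finite_measure N \<and> sets P = sets ThetaM \<and> sets N = sets ThetaM \<and>
     (\<forall>A\<in>sets ThetaM. Im (\<nu> A) = measure P A - measure N A)"
  proof (rule jordan)
    show "(\<lambda>n. Im (\<nu> (A n))) sums Im (\<nu> (\<Union>n. A n))" if "range A \<subseteq> sets ThetaM" "disjoint_family A" for A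
      using ca[OF that] by (simp add: sums_complex_iff)
  qed (simp add: e)
  then obtain P2 N2 where 2: "finite_measure P2" "finite_measure N2" "sets P2 = sets ThetaM" "sets N2 = sets ThetaM"
     "\<forall>A\<in>sets ThetaM. Im (\<nu> A) = measure P2 A - measure N2 A" by blast
  have "cmrep \<nu> P1 N1 P2 N2"
    unfolding cmrep_def using 1 2 by (auto simp: complex_eq_iff)
  then show ?thesis by blast
qed

lemma cm_integral_some:
  assumes "cmrep \<nu> \<mu>1 \<mu>2 \<mu>3 \<mu>4"
  shows "\<exists>\<mu>1' \<mu>2' \<mu>3' \<mu>4'. cmrep \<nu> \<mu>1' \<mu>2' \<mu>3' \<mu>4' \<and> cm_integral \<nu> f = cmexpr \<mu>1' \<mu>2' \<mu>3' \<mu>4' f"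
proof -
  have eq: "cm_integral \<nu> f = (SOME c. \<exists>\<mu>1 \<mu>2 \<mu>3 \<mu>4. cmrep \<nu> \<mu>1 \<mu>2 \<mu>3 \<mu>4 \<and> c = cmexpr \<mu>1 \<mu>2 \<mu>3 \<mu>4 f)"
    unfolding cm_integral_def cmrep_def cmexpr_def by (simp add: conj_assoc)
  have "\<exists>c. \<exists>\<mu>1 \<mu>2 \<mu>3 \<mu>4. cmrep \<nu> \<mu>1 \<mu>2 \<mu>3 \<mu>4 \<and> c = cmexpr \<mu>1 \<mu>2 \<mu>3 \<mu>4 f"
    using assms by blast
  from someI_ex[OF this] show ?thesis unfolding eq[symmetric] by blast
qed

lemma cm_re_im:
  assumes rep: "cmrep \<nu> \<mu>1 \<mu>2 \<mu>3 \<mu>4"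
    and okL: "\<forall>(c,m)\<in>set L. finite_measure m \<and> sets m = sets ThetaM"
    and bmf: "bm f"
  shows "(\<forall>A\<in>sets ThetaM. Re (\<nu> A) = lsetv L A) \<Longrightarrow> Re (cm_integral \<nu> f) = lint L f"
    and "(\<forall>A\<in>sets ThetaM. Im (\<nu> A) = lsetv L A) \<Longrightarrow> Im (cm_integral \<nu> f) = lint L f"
proof -
  obtain \<mu>1' \<mu>2' \<mu>3' \<mu>4' where rep': "cmrep \<nu> \<mu>1' \<mu>2' \<mu>3' \<mu>4'" and ci: "cm_integral \<nu> f = cmexpr \<mu>1' \<mu>2' \<mu>3' \<mu>4' f"
    using cm_integral_some[OF rep] by blast
  have fm: "f \<in> borel_measurable ThetaM" using bmf by (simp add: bm_def)
  obtain K where K: "\<forall>x\<in>space ThetaM. \<bar>f x\<bar> \<le> K" using bmf by (auto simp: bm_def space_ThetaM)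
  have ok': "finite_measure \<mu> \<and> sets \<mu> = sets ThetaM" if "\<mu> \<in> {\<mu>1',\<mu>2',\<mu>3',\<mu>4'}" for \<mu>
    using rep' that unfolding cmrep_def by blast
  have okneg: "\<forall>(c,m)\<in>set (negL L). finite_measure m \<and> sets m = sets ThetaM"
    using okL by (auto simp: negL_def)
  { assume h: "\<forall>A\<in>sets ThetaM. Re (\<nu> A) = lsetv L A"
    let ?L = "[(1,\<mu>1'),(-1,\<mu>2')] @ negL L"
    have "lint ?L f = 0"
    proof (rule lin_zero[OF _ _ fm K])
      show "\<forall>(c,m)\<in>set ?L. finite_measure m \<and> sets m = sets ThetaM" using ok' okneg by auto
      show "\<forall>A\<in>sets ThetaM. lsetv ?L A = 0" using h cmrep_Re[OF rep'] by auto
    qed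
    then show "Re (cm_integral \<nu> f) = lint L f" by (simp add: ci cmexpr_Re) }
  { assume h: "\<forall>A\<in>sets ThetaM. Im (\<nu> A) = lsetv L A"
    let ?L = "[(1,\<mu>3'),(-1,\<mu>4')] @ negL L"
    have "lint ?L f = 0"
    proof (rule lin_zero[OF _ _ fm K])
      show "\<forall>(c,m)\<in>set ?L. finite_measure m \<and> sets m = sets ThetaM" using ok' okneg by auto
      show "\<forall>A\<in>sets ThetaM. lsetv ?L A = 0" using h cmrep_Im[OF rep'] by auto
    qed
    then show "Im (cm_integral \<nu> f) = lint L f" by (simp add: ci cmexpr_Im) }
qed

lemma cm_integral_rep:
  assumes rep: "cmrep \<nu> \<mu>1 \<mu>2 \<mu>3 \<mu>4" and bmf: "bm f"
  shows "cm_integral \<nu> f = cmexpr \<mu>1 \<mu>2 \<mu>3 \<mu>4 f"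
proof -
  have ok: "finite_measure \<mu> \<and> sets \<mu> = sets ThetaM" if "\<mu> \<in> {\<mu>1,\<mu>2,\<mu>3,\<mu>4}" for \<mu>
    using rep that unfolding cmrep_def by blast
  have "Re (cm_integral \<nu> f) = lint [(1,\<mu>1),(-1,\<mu>2)] f"
    by (rule cm_re_im(1)[OF rep _ bmf]) (use ok cmrep_Re[OF rep] in auto)
  moreover have "Im (cm_integral \<nu> f) = lint [(1,\<mu>3),(-1,\<mu>4)] f"
    by (rule cm_re_im(2)[OF rep _ bmf]) (use ok cmrep_Im[OF rep] in auto)
  ultimately show ?thesis by (simp add: complex_eq_iff cmexpr_Re cmexpr_Im)
qed


lemma rep_ok: "cmrep \<nu> \<mu>1 \<mu>2 \<mu>3 \<mu>4 \<Longrightarrow> \<mu> \<in> {\<mu>1,\<mu>2,\<mu>3,\<mu>4} \<Longrightarrow> finite_measure \<mu> \<and> sets \<mu> = sets ThetaM"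
  unfolding cmrep_def by blast

lemma space_eqT: "sets \<mu> = sets ThetaM \<Longrightarrow> space \<mu> = Theta"
  using sets_eq_imp_space_eq space_ThetaM by metis

lemma bm_integrable:
  assumes "finite_measure \<mu>" "sets \<mu> = sets ThetaM" "bm f"
  shows "integrable \<mu> f"
proof -
  interpret finite_measure \<mu> by fact
  obtain K where K: "\<forall>x\<in>Theta. \<bar>f x\<bar> \<le> K" and fm: "f \<in> borel_measurable ThetaM" using assms(3) by (auto simp: bm_def)
  have "f \<in> borel_measurable \<mu>" unfolding measurable_cong_sets[OF assms(2) refl] by (rule fm)
  moreover have "AE x in \<mu>. norm (f x) \<le> K" using K space_eqT[OF assms(2)] by (intro AE_I2) auto
  ultimately show ?thesis by (intro integrable_const_bound) auto
qed

lemma bm_lin: "bm f \<Longrightarrow> bm g \<Longrightarrow> bm (\<lambda>x. a * f x + b * g x)"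
proof -
  assume "bm f" "bm g"
  then obtain K1 K2 where K: "\<forall>x\<in>Theta. \<bar>f x\<bar> \<le> K1" "\<forall>x\<in>Theta. \<bar>g x\<bar> \<le> K2"
    and m: "f \<in> borel_measurable ThetaM" "g \<in> borel_measurable ThetaM" by (auto simp: bm_def)
  have "\<bar>a * f x + b * g x\<bar> \<le> \<bar>a\<bar> * K1 + \<bar>b\<bar> * K2" if "x \<in> Theta" for x
  proof -
    have "\<bar>a * f x + b * g x\<bar> \<le> \<bar>a\<bar> * \<bar>f x\<bar> + \<bar>b\<bar> * \<bar>g x\<bar>" by (simp add: abs_mult[symmetric] abs_triangle_ineq)
    also have "\<dots> \<le> \<bar>a\<bar> * K1 + \<bar>b\<bar> * K2" using K that by (intro add_mono mult_left_mono) auto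
    finally show ?thesis .
  qed
  then show ?thesis using m unfolding bm_def by (auto intro!: borel_measurable_add borel_measurable_times)
qed

lemma bm_mult: "bm f \<Longrightarrow> bm g \<Longrightarrow> bm (\<lambda>x. f x * g x)"
proof -
  assume "bm f" "bm g"
  then obtain K1 K2 where K: "\<forall>x\<in>Theta. \<bar>f x\<bar> \<le> K1" "\<forall>x\<in>Theta. \<bar>g x\<bar> \<le> K2"
    and m: "f \<in> borel_measurable ThetaM" "g \<in> borel_measurable ThetaM" by (auto simp: bm_def)
  have "\<bar>f x * g x\<bar> \<le> K1 * K2" if "x \<in> Theta" for x
    using K that by (simp add: abs_mult mult_mono')
  then show ?thesis using m unfolding bm_def by (auto intro!: borel_measurable_times)
qed

lemma cm_lin:
  assumes rep: "cmrep \<nu> \<mu>1 \<mu>2 \<mu>3 \<mu>4" and f: "bm f" and g: "bm g"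
  shows "cm_integral \<nu> (\<lambda>x. a * f x + b * g x) = complex_of_real a * cm_integral \<nu> f + complex_of_real b * cm_integral \<nu> g"
proof -
  have I: "integrable \<mu> f" "integrable \<mu> g" if "\<mu> \<in> {\<mu>1,\<mu>2,\<mu>3,\<mu>4}" for \<mu>
    using rep_ok[OF rep that] f g bm_integrable by blast+
  have e: "(\<integral>x. a * f x + b * g x \<partial>\<mu>) = a * (\<integral>x. f x \<partial>\<mu>) + b * (\<integral>x. g x \<partial>\<mu>)" if "\<mu> \<in> {\<mu>1,\<mu>2,\<mu>3,\<mu>4}" for \<mu>
    using I[OF that] by simp
  show ?thesis
    unfolding cm_integral_rep[OF rep bm_lin[OF f g]] cm_integral_rep[OF rep f] cm_integral_rep[OF rep g]
    unfolding cmexpr_def using e by (simp add: complex_eq_iff algebra_simps)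
qed

lemma cm_bound:
  assumes rep: "cmrep \<nu> \<mu>1 \<mu>2 \<mu>3 \<mu>4" and f: "bm f" and K: "\<forall>x\<in>Theta. \<bar>f x\<bar> \<le> K"
  shows "cmod (cm_integral \<nu> f) \<le> K * (measure \<mu>1 Theta + measure \<mu>2 Theta + measure \<mu>3 Theta + measure \<mu>4 Theta)"
proof -
  have b: "\<bar>\<integral>x. f x \<partial>\<mu>\<bar> \<le> K * measure \<mu> Theta" if "\<mu> \<in> {\<mu>1,\<mu>2,\<mu>3,\<mu>4}" for \<mu>
  proof -
    have fm: "finite_measure \<mu>" and s: "sets \<mu> = sets ThetaM" using rep_ok[OF rep that] by auto
    interpret finite_measure \<mu> by (rule fm)
    have sp: "space \<mu> = Theta" by (rule space_eqT[OF s])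
    have I: "integrable \<mu> f" by (rule bm_integrable[OF fm s f])
    have "\<bar>\<integral>x. f x \<partial>\<mu>\<bar> \<le> (\<integral>x. \<bar>f x\<bar> \<partial>\<mu>)" using integral_norm_bound[of \<mu> f] by simp
    also have "\<dots> \<le> (\<integral>x. K \<partial>\<mu>)"
      by (rule integral_mono) (use I K sp in auto)
    also have "\<dots> = K * measure \<mu> Theta" by (simp add: sp)
    finally show ?thesis .
  qed
  have ab: "cmod (complex_of_real a + \<i> * complex_of_real b) \<le> \<bar>a\<bar> + \<bar>b\<bar>" for a b
    using norm_triangle_ineq[of "complex_of_real a" "\<i> * complex_of_real b"] by (simp add: norm_mult)
  have "cmod (cm_integral \<nu> f) \<le> \<bar>(\<integral>x. f x \<partial>\<mu>1) - (\<integral>x. f x \<partial>\<mu>2)\<bar> + \<bar>(\<integral>x. f x \<partial>\<mu>3) - (\<integral>x. f x \<partial>\<mu>4)\<bar>"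
    unfolding cm_integral_rep[OF rep f] cmexpr_def by (rule ab)
  also have "\<dots> \<le> K * measure \<mu>1 Theta + K * measure \<mu>2 Theta + (K * measure \<mu>3 Theta + K * measure \<mu>4 Theta)"
    using b[of \<mu>1] b[of \<mu>2] b[of \<mu>3] b[of \<mu>4] by (intro add_mono order_trans[OF abs_triangle_ineq4]) auto
  finally show ?thesis by (simp add: algebra_simps)
qed

lemma cm_cong:
  assumes rep: "cmrep \<nu> \<mu>1 \<mu>2 \<mu>3 \<mu>4" and f: "bm f" and g: "bm g" and eq: "\<forall>x\<in>Theta. f x = g x"
  shows "cm_integral \<nu> f = cm_integral \<nu> g"
proof -
  have e: "(\<integral>x. f x \<partial>\<mu>) = (\<integral>x. g x \<partial>\<mu>)" if "\<mu> \<in> {\<mu>1,\<mu>2,\<mu>3,\<mu>4}" for \<mu>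
    using rep_ok[OF rep that] eq space_eqT by (intro Bochner_Integration.integral_cong) auto
  show ?thesis unfolding cm_integral_rep[OF rep f] cm_integral_rep[OF rep g] cmexpr_def using e by simp
qed

lemma cont_bdd: fixes f :: "(int^'d::finite \<Rightarrow> real) \<Rightarrow> real" shows "continuous_on Theta f \<Longrightarrow> \<exists>K. \<forall>x\<in>Theta. \<bar>f x\<bar> \<le> K"
proof -
  assume "continuous_on Theta f"
  then have "compact (f ` Theta)" using compact_Theta by (rule compact_continuous_image)
  then have "bounded (f ` Theta)" by (rule compact_imp_bounded)
  then obtain K where "\<forall>y\<in>f ` Theta. norm y \<le> K" unfolding bounded_iff by blast
  then show ?thesis by auto
qed

lemma cont_meas:
  fixes f :: "(int^'d::finite \<Rightarrow> real) \<Rightarrow> real"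
  assumes "continuous_on Theta f"
  shows "f \<in> borel_measurable ThetaM"
proof -
  have "\<forall>n. \<exists>ps. \<forall>\<theta>\<in>Theta. \<bar>f \<theta> - pev ps \<theta>\<bar> < 1 / real (Suc n)"
    using SW_approx[OF assms] by simp
  then obtain P where P: "\<And>n \<theta>. \<theta> \<in> Theta \<Longrightarrow> \<bar>f \<theta> - pev (P n) \<theta>\<bar> < 1 / real (Suc n)" by metis
  show ?thesis
  proof (rule borel_measurable_LIMSEQ_real[where u="\<lambda>n. pev (P n)"])
    fix x :: "int^'d \<Rightarrow> real" assume x: "x \<in> space ThetaM"
    have "(\<lambda>n. pev (P n) x - f x) \<longlonglongrightarrow> 0"
    proof (rule Lim_null_comparison)
      show "\<forall>\<^sub>F n in sequentially. norm (pev (P n) x - f x) \<le> 1 / real (Suc n)"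
        using P[of x] x by (auto simp: space_ThetaM abs_minus_commute less_imp_le)
      show "(\<lambda>n. 1 / real (Suc n)) \<longlonglongrightarrow> 0" by (rule LIMSEQ_Suc[OF lim_const_over_n])
    qed
    then show "(\<lambda>n. pev (P n) x) \<longlonglongrightarrow> f x" by (simp add: LIM_zero_iff)
  qed (rule meas_pev)
qed

lemma cont_bm: "continuous_on Theta f \<Longrightarrow> bm f"
  unfolding bm_def using cont_meas cont_bdd by blast


lemma mvt01:
  fixes F F' :: "real \<Rightarrow> real"
  assumes "\<And>t. t \<in> {0..1} \<Longrightarrow> (F has_real_derivative F' t) (at t within {0..1})"
    and "\<And>t. t \<in> {0..1} \<Longrightarrow> \<bar>F' t\<bar> \<le> B" and "x \<in> {0..1}"
  shows "\<bar>F x - F 0\<bar> \<le> B"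
proof -
  have "norm (F x - F 0) \<le> B * norm (x - 0)"
    by (rule field_differentiable_bound[where S="{0..1}" and f'=F']) (use assms in auto)
  moreover have "B \<ge> 0" using assms(2)[of 0] by auto
  moreover have "norm (x - 0) \<le> 1" using assms(3) by auto
  ultimately have "norm (F x - F 0) \<le> B" by (smt (verit) mult_left_le)
  then show ?thesis by simp
qed

lemma dpoly_append[simp]: "dpoly i (a @ b) = dpoly i a @ dpoly i b" by (simp add: dpoly_def)
lemma dpoly_pscale: "pev (dpoly i (pscale r ps)) \<theta> = r * pev (dpoly i ps) \<theta>"
  by (induction ps) (auto simp: dpoly_def pscale_def algebra_simps)

lemma zero_Theta: "(\<lambda>_. 0) \<in> Theta" by (simp add: Theta_def)

lemma cm_scale:
  assumes rep: "cmrep \<nu> \<mu>1 \<mu>2 \<mu>3 \<mu>4" and f: "bm f"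
  shows "cm_integral \<nu> (\<lambda>x. a * f x) = complex_of_real a * cm_integral \<nu> f"
  using cm_lin[OF rep f f, of a 0] by simp

lemma cm_diff:
  assumes rep: "cmrep \<nu> \<mu>1 \<mu>2 \<mu>3 \<mu>4" and f: "bm f" and g: "bm g"
  shows "cm_integral \<nu> (\<lambda>x. f x - g x) = cm_integral \<nu> f - cm_integral \<nu> g"
  using cm_lin[OF rep f g, of 1 "-1"] by simp

lemma bm_pev: "bm (pev ps)" by (rule cont_bm) (rule continuous_on_subset[OF cont_pev subset_UNIV])

lemma norm_Bspace:
  fixes \<nu> :: "(int^'d::finite \<Rightarrow> real) set \<Rightarrow> complex"
  assumes "\<nu> \<in> Bspace"
  obtains N where "N \<ge> 0" "cm_norm \<nu> = ereal N"
    "\<And>i \<psi>. smooth \<psi> \<Longrightarrow> local_fun \<psi> \<Longrightarrow> (\<forall>\<theta>\<in>Theta. \<bar>\<psi> \<theta>\<bar> \<le> 1) \<Longrightarrow> cmod (cm_integral \<nu> (partial i \<psi>)) \<le> N"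
proof -
  let ?S = "{(i, \<phi>). smooth \<phi> \<and> local_fun \<phi> \<and> (\<forall>\<theta>\<in>Theta. \<bar>\<phi> \<theta>\<bar> \<le> 1)} :: ((int^'d) \<times> ((int^'d \<Rightarrow> real) \<Rightarrow> real)) set"
  have fin: "cm_norm \<nu> < \<infinity>" using assms by (simp add: Bspace_def)
  have up: "ereal (cmod (cm_integral \<nu> (partial i \<psi>))) \<le> cm_norm \<nu>" if "(i, \<psi>) \<in> ?S" for i \<psi>
    unfolding cm_norm_def using that by (intro SUP_upper2[OF that]) simp
  have e: "pev [] = (\<lambda>_::int^'d \<Rightarrow> real. 0)" by (simp add: fun_eq_iff)
  have "smooth (\<lambda>_::int^'d \<Rightarrow> real. 0::real)" by (subst e[symmetric]) (rule smooth_pev)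
  moreover have "local_fun (\<lambda>_::int^'d \<Rightarrow> real. 0::real)" by (subst e[symmetric]) (rule local_pev)
  ultimately have z: "(0, \<lambda>_. 0) \<in> ?S" by auto
  have "0 \<le> cm_norm \<nu>" using up[OF z] by (rule order_trans[rotated]) simp
  then obtain N where N: "cm_norm \<nu> = ereal N" "N \<ge> 0" using fin by (cases "cm_norm \<nu>") auto
  show ?thesis
  proof (rule that[OF N(2) N(1)])
    fix i :: "int^'d" and \<psi> :: "(int^'d \<Rightarrow> real) \<Rightarrow> real" assume "smooth \<psi>" "local_fun \<psi>" "\<forall>\<theta>\<in>Theta. \<bar>\<psi> \<theta>\<bar> \<le> 1"
    then have "(i, \<psi>) \<in> ?S" by simp
    then show "cmod (cm_integral \<nu> (partial i \<psi>)) \<le> N" using up N by fastforce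
  qed
qed

lemma smooth_cont_partial: "smooth \<psi> \<Longrightarrow> continuous_on Theta (partial i \<psi>)"
  unfolding smooth_def by (metis Ck.simps(1) Ck.simps(2))

lemma poly_bound:
  fixes \<nu> :: "(int^'d::finite \<Rightarrow> real) set \<Rightarrow> complex"
  assumes rep: "cmrep \<nu> \<mu>1 \<mu>2 \<mu>3 \<mu>4"
    and Nb: "\<And>i \<psi>. smooth \<psi> \<Longrightarrow> local_fun \<psi> \<Longrightarrow> (\<forall>\<theta>\<in>Theta. \<bar>\<psi> \<theta>\<bar> \<le> 1) \<Longrightarrow> cmod (cm_integral \<nu> (partial i \<psi>)) \<le> N"
    and c: "c > 0" and pb: "\<forall>\<theta>\<in>Theta. \<bar>pev ps \<theta>\<bar> \<le> c"
  shows "cmod (cm_integral \<nu> (pev (dpoly i ps))) \<le> c * N"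
proof -
  let ?\<psi> = "pev (pscale (1/c) ps) :: (int^'d \<Rightarrow> real) \<Rightarrow> real"
  have b1: "\<forall>\<theta>\<in>Theta. \<bar>?\<psi> \<theta>\<bar> \<le> 1" using pb c by (auto simp: abs_mult divide_le_eq)
  have le: "cmod (cm_integral \<nu> (partial i ?\<psi>)) \<le> N" by (rule Nb[OF smooth_pev local_pev b1])
  have "cm_integral \<nu> (partial i ?\<psi>) = cm_integral \<nu> (\<lambda>\<theta>. (1/c) * pev (dpoly i ps) \<theta>)"
  proof (rule cm_cong[OF rep])
    show "bm (partial i ?\<psi>)" by (rule cont_bm[OF smooth_cont_partial[OF smooth_pev]])
    have e': "pev (pscale (1/c) (dpoly i ps)) = (\<lambda>\<theta>. (1/c) * pev (dpoly i ps) \<theta>)"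
      by (rule ext) (simp only: pev_pscale)
    show "bm (\<lambda>\<theta>. (1/c) * pev (dpoly i ps) \<theta>)" using bm_pev[of "pscale (1/c) (dpoly i ps)"] by (simp only: e')
    show "\<forall>x\<in>Theta. partial i ?\<psi> x = 1 / c * pev (dpoly i ps) x"
      by (simp add: partial_pev dpoly_pscale)
  qed
  also have "\<dots> = complex_of_real (1/c) * cm_integral \<nu> (pev (dpoly i ps))"
    by (rule cm_scale[OF rep bm_pev])
  finally have "cmod (complex_of_real (1/c) * cm_integral \<nu> (pev (dpoly i ps))) \<le> N" using le by simp
  then have "(1/c) * cmod (cm_integral \<nu> (pev (dpoly i ps))) \<le> N" using c by (simp add: norm_mult norm_divide)
  then show ?thesis using c by (simp add: field_simps)
qed


lemma eps_bound:
  fixes x K N T :: real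
  assumes h: "\<And>\<delta>. \<delta> > 0 \<Longrightarrow> x \<le> (K + 2*\<delta>) * N + \<delta> * T" and N: "N \<ge> 0" and T: "T \<ge> 0"
  shows "x \<le> K * N"
proof (rule field_le_epsilon)
  fix e :: real assume e: "0 < e"
  define \<delta> where "\<delta> = e / (2*N + T + 1)"
  have d: "\<delta> > 0" using e N T by (simp add: \<delta>_def)
  have "\<delta> * (2*N + T + 1) = e" using N T by (simp add: \<delta>_def)
  then have "\<delta> * (2*N + T) \<le> e" using d by (simp add: algebra_simps)
  then have "(K + 2*\<delta>) * N + \<delta> * T \<le> K * N + e" by (simp add: algebra_simps)
  with h[OF d] show "x \<le> K * N + e" by simp
qed

lemma meas_nonneg_sum: "0 \<le> measure \<mu>1 Theta + measure \<mu>2 Theta + measure \<mu>3 Theta + measure \<mu>4 Theta"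
  by simp

lemma pev_deriv_within: "((\<lambda>t. pev ps (\<theta>(i:=t))) has_real_derivative pev (dpoly i ps) (\<theta>(i:=t))) (at t within S)"
  by (rule has_field_derivative_at_within[OF pev_deriv])

lemma cont_bound:
  fixes \<nu> :: "(int^'d::finite \<Rightarrow> real) set \<Rightarrow> complex"
  assumes rep: "cmrep \<nu> \<mu>1 \<mu>2 \<mu>3 \<mu>4"
    and Nb: "\<And>i \<psi>. smooth \<psi> \<Longrightarrow> local_fun \<psi> \<Longrightarrow> (\<forall>\<theta>\<in>Theta. \<bar>\<psi> \<theta>\<bar> \<le> 1) \<Longrightarrow> cmod (cm_integral \<nu> (partial i \<psi>)) \<le> N"
    and N: "N \<ge> 0"
    and gc: "continuous_on Theta g" and K: "\<forall>\<theta>\<in>Theta. \<bar>g \<theta>\<bar> \<le> K"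
  shows "cmod (cm_integral \<nu> g) \<le> K * N"
proof (rule eps_bound[OF _ N meas_nonneg_sum])
  fix \<delta> :: real assume d: "\<delta> > 0"
  let ?T = "measure \<mu>1 Theta + measure \<mu>2 Theta + measure \<mu>3 Theta + measure \<mu>4 Theta"
  have K0: "K \<ge> 0" using K zero_Theta by fastforce
  obtain q where q: "\<forall>\<theta>\<in>Theta. \<bar>g \<theta> - pev q \<theta>\<bar> < \<delta>" using SW_approx[OF gc d] by blast
  define i :: "int^'d" where "i = 0"
  define H where "H = anti i q"
  have Hb: "\<forall>\<theta>\<in>Theta. \<bar>pev H \<theta>\<bar> \<le> K + \<delta>"
  proof
    fix \<theta> :: "int^'d \<Rightarrow> real" assume th: "\<theta> \<in> Theta"
    have "\<bar>pev H (\<theta>(i:=\<theta> i)) - pev H (\<theta>(i:=0))\<bar> \<le> K + \<delta>"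
    proof (rule mvt01[where F'="\<lambda>t. pev q (\<theta>(i:=t))"])
      show "((\<lambda>t. pev H (\<theta>(i:=t))) has_real_derivative pev q (\<theta>(i:=t))) (at t within {0..1})" for t
        using pev_deriv_within[of H \<theta> i t "{0..1}"] by (simp add: H_def)
      show "\<bar>pev q (\<theta>(i:=t))\<bar> \<le> K + \<delta>" if "t \<in> {0..1}" for t
      proof -
        have "\<theta>(i:=t) \<in> Theta" using Theta_upd[OF th that] .
        then show ?thesis using q K by (smt (verit, ccfv_SIG))
      qed
      show "\<theta> i \<in> {0..1}" using Theta_mem[OF th] .
    qed
    then show "\<bar>pev H \<theta>\<bar> \<le> K + \<delta>" by (simp add: H_def pev_anti_0)
  qed
  have "cmod (cm_integral \<nu> (pev (dpoly i H))) \<le> (K + \<delta>) * N"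
  proof (rule poly_bound[OF rep Nb _ Hb])
    show "0 < K + \<delta>" using d K0 by linarith
  qed
  then have c1: "cmod (cm_integral \<nu> (pev q)) \<le> (K + \<delta>) * N" unfolding H_def dpoly_anti .
  have cD: "continuous_on Theta (\<lambda>x. g x - pev q x)"
    by (rule continuous_on_diff[OF gc continuous_on_subset[OF cont_pev subset_UNIV]])
  have "cm_integral \<nu> (\<lambda>x. g x - pev q x) = cm_integral \<nu> g - cm_integral \<nu> (pev q)"
    by (rule cm_diff[OF rep cont_bm[OF gc] bm_pev])
  moreover have "cmod (cm_integral \<nu> (\<lambda>x. g x - pev q x)) \<le> \<delta> * ?T"
  proof (rule cm_bound[OF rep cont_bm[OF cD]])
    show "\<forall>x\<in>Theta. \<bar>g x - pev q x\<bar> \<le> \<delta>" using q by (auto intro: less_imp_le)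
  qed
  ultimately have c2: "cmod (cm_integral \<nu> g - cm_integral \<nu> (pev q)) \<le> \<delta> * ?T" by simp
  have "cmod (cm_integral \<nu> g) \<le> cmod (cm_integral \<nu> (pev q)) + cmod (cm_integral \<nu> g - cm_integral \<nu> (pev q))"
    by (rule norm_triangle_sub)
  also have "\<dots> \<le> (K + \<delta>) * N + \<delta> * ?T" using c1 c2 by linarith
  also have "\<dots> \<le> (K + 2*\<delta>) * N + \<delta> * ?T" using d N by (simp add: algebra_simps)
  finally show "cmod (cm_integral \<nu> g) \<le> (K + 2*\<delta>) * N + \<delta> * ?T" .
qed


lemma deriv_bound:
  fixes \<nu> :: "(int^'d::finite \<Rightarrow> real) set \<Rightarrow> complex"
  assumes rep: "cmrep \<nu> \<mu>1 \<mu>2 \<mu>3 \<mu>4"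
    and Nb: "\<And>i \<psi>. smooth \<psi> \<Longrightarrow> local_fun \<psi> \<Longrightarrow> (\<forall>\<theta>\<in>Theta. \<bar>\<psi> \<theta>\<bar> \<le> 1) \<Longrightarrow> cmod (cm_integral \<nu> (partial i \<psi>)) \<le> N"
    and N: "N \<ge> 0"
    and hc: "continuous_on Theta h" and K: "\<forall>\<theta>\<in>Theta. \<bar>h \<theta>\<bar> \<le> K"
    and gc: "continuous_on Theta g"
    and hd: "\<forall>\<theta>\<in>Theta. ((\<lambda>t. h (\<theta>(i:=t))) has_real_derivative g \<theta>) (at (\<theta> i) within {0..1})"
  shows "cmod (cm_integral \<nu> g) \<le> K * N"
proof (rule eps_bound[OF _ N meas_nonneg_sum])
  fix \<delta> :: real assume d: "\<delta> > 0"
  let ?T = "measure \<mu>1 Theta + measure \<mu>2 Theta + measure \<mu>3 Theta + measure \<mu>4 Theta"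
  have K0: "K \<ge> 0" using K zero_Theta by fastforce
  obtain q where q: "\<forall>\<theta>\<in>Theta. \<bar>g \<theta> - pev q \<theta>\<bar> < \<delta>" using SW_approx[OF gc d] by blast
  obtain r where r: "\<forall>\<theta>\<in>Theta. \<bar>h \<theta> - pev r \<theta>\<bar> < \<delta>" using SW_approx[OF hc d] by blast
  define H where "H = kill i r @ anti i q"
  have dH: "pev (dpoly i H) = pev q" by (rule ext) (simp add: H_def pev_dpoly_kill)
  have Hb: "\<forall>\<theta>\<in>Theta. \<bar>pev H \<theta>\<bar> \<le> K + 2*\<delta>"
  proof
    fix \<theta> :: "int^'d \<Rightarrow> real" assume th: "\<theta> \<in> Theta"
    have th0: "\<theta>(i:=0) \<in> Theta" using Theta_upd[OF th, of 0] by simp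
    have hder: "((\<lambda>s. h (\<theta>(i:=s))) has_real_derivative g (\<theta>(i:=t))) (at t within {0..1})" if "t \<in> {0..1}" for t
      using hd Theta_upd[OF th that, of i] by auto
    have "\<bar>(pev (anti i q) (\<theta>(i:=\<theta> i)) - h (\<theta>(i:=\<theta> i))) - (pev (anti i q) (\<theta>(i:=0)) - h (\<theta>(i:=0)))\<bar> \<le> \<delta>"
    proof (rule mvt01[where F'="\<lambda>t. pev q (\<theta>(i:=t)) - g (\<theta>(i:=t))"])
      show "((\<lambda>t. pev (anti i q) (\<theta>(i:=t)) - h (\<theta>(i:=t))) has_real_derivative pev q (\<theta>(i:=t)) - g (\<theta>(i:=t))) (at t within {0..1})"
        if "t \<in> {0..1}" for t
        using DERIV_diff[OF pev_deriv_within[of "anti i q" \<theta> i t "{0..1}"] hder[OF that]] by simp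
      show "\<bar>pev q (\<theta>(i:=t)) - g (\<theta>(i:=t))\<bar> \<le> \<delta>" if "t \<in> {0..1}" for t
      proof -
        have "\<bar>g (\<theta>(i:=t)) - pev q (\<theta>(i:=t))\<bar> < \<delta>" using q Theta_upd[OF th that] by blast
        then show ?thesis by linarith
      qed
      show "\<theta> i \<in> {0..1}" using Theta_mem[OF th] .
    qed
    then have a: "\<bar>pev (anti i q) \<theta> - h \<theta> + h (\<theta>(i:=0))\<bar> \<le> \<delta>" by (simp add: pev_anti_0)
    have b: "\<bar>h (\<theta>(i:=0)) - pev r (\<theta>(i:=0))\<bar> < \<delta>" using r th0 by blast
    have c: "\<bar>h \<theta>\<bar> \<le> K" using K th by blast
    have e: "pev H \<theta> = pev r (\<theta>(i:=0)) + pev (anti i q) \<theta>" by (simp add: H_def pev_kill)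
    show "\<bar>pev H \<theta>\<bar> \<le> K + 2*\<delta>" unfolding e using a b c by linarith
  qed
  have "cmod (cm_integral \<nu> (pev (dpoly i H))) \<le> (K + 2*\<delta>) * N"
  proof (rule poly_bound[OF rep Nb _ Hb])
    show "0 < K + 2*\<delta>" using d K0 by linarith
  qed
  then have c1: "cmod (cm_integral \<nu> (pev q)) \<le> (K + 2*\<delta>) * N" unfolding dH .
  have cD: "continuous_on Theta (\<lambda>x. g x - pev q x)"
    by (rule continuous_on_diff[OF gc continuous_on_subset[OF cont_pev subset_UNIV]])
  have "cm_integral \<nu> (\<lambda>x. g x - pev q x) = cm_integral \<nu> g - cm_integral \<nu> (pev q)"
    by (rule cm_diff[OF rep cont_bm[OF gc] bm_pev])
  moreover have "cmod (cm_integral \<nu> (\<lambda>x. g x - pev q x)) \<le> \<delta> * ?T"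
  proof (rule cm_bound[OF rep cont_bm[OF cD]])
    show "\<forall>x\<in>Theta. \<bar>g x - pev q x\<bar> \<le> \<delta>" using q by (auto intro: less_imp_le)
  qed
  ultimately have c2: "cmod (cm_integral \<nu> g - cm_integral \<nu> (pev q)) \<le> \<delta> * ?T" by simp
  have "cmod (cm_integral \<nu> g) \<le> cmod (cm_integral \<nu> (pev q)) + cmod (cm_integral \<nu> g - cm_integral \<nu> (pev q))"
    by (rule norm_triangle_sub)
  also have "\<dots> \<le> (K + 2*\<delta>) * N + \<delta> * ?T" using c1 c2 by linarith
  finally show "cmod (cm_integral \<nu> g) \<le> (K + 2*\<delta>) * N + \<delta> * ?T" .
qed


lemma bm_indicator: "A \<in> sets ThetaM \<Longrightarrow> bm (indicator A :: _ \<Rightarrow> real)"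
  unfolding bm_def by (auto intro!: exI[of _ 1] simp: indicator_def)

lemma bm_max0: "bm f \<Longrightarrow> bm (\<lambda>x. max (f x) 0)"
proof -
  assume "bm f"
  then obtain K where K: "\<forall>x\<in>Theta. \<bar>f x\<bar> \<le> K" and m: "f \<in> borel_measurable ThetaM" by (auto simp: bm_def)
  have "\<forall>x\<in>Theta. \<bar>max (f x) 0\<bar> \<le> K" using K by auto
  then show ?thesis using m unfolding bm_def by (auto intro!: borel_measurable_max)
qed

lemma bm_neg: "bm f \<Longrightarrow> bm (\<lambda>x. - f x)"
  using bm_lin[of f f "-1" 0] by simp

lemma dens_facts:
  fixes \<psi> :: "(int^'d::finite \<Rightarrow> real) \<Rightarrow> real"
  assumes fm: "finite_measure \<mu>" and s: "sets \<mu> = sets ThetaM" and b: "bm \<psi>" and nn: "\<And>x. 0 \<le> \<psi> x"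
  shows "finite_measure (density \<mu> (\<lambda>x. ennreal (\<psi> x)))"
    and "sets (density \<mu> (\<lambda>x. ennreal (\<psi> x))) = sets ThetaM"
    and "\<And>A. A \<in> sets ThetaM \<Longrightarrow> measure (density \<mu> (\<lambda>x. ennreal (\<psi> x))) A = (\<integral>x. \<psi> x * indicator A x \<partial>\<mu>)"
    and "\<And>g. g \<in> borel_measurable ThetaM \<Longrightarrow> (\<integral>x. g x \<partial>density \<mu> (\<lambda>x. ennreal (\<psi> x))) = (\<integral>x. \<psi> x * g x \<partial>\<mu>)"
proof -
  interpret finite_measure \<mu> by (rule fm)
  have meq: "borel_measurable \<mu> = borel_measurable ThetaM" by (rule measurable_cong_sets[OF s refl])
  have pm: "\<psi> \<in> borel_measurable \<mu>" using b by (simp add: bm_def meq)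
  have I: "integrable \<mu> \<psi>" by (rule bm_integrable[OF fm s b])
  show ig: "(\<integral>x. g x \<partial>density \<mu> (\<lambda>x. ennreal (\<psi> x))) = (\<integral>x. \<psi> x * g x \<partial>\<mu>)" if "g \<in> borel_measurable ThetaM" for g
    by (rule integral_real_density) (use pm nn that meq in auto)
  show "sets (density \<mu> (\<lambda>x. ennreal (\<psi> x))) = sets ThetaM" using s by simp
  show "finite_measure (density \<mu> (\<lambda>x. ennreal (\<psi> x)))"
  proof (rule finite_measureI)
    have "emeasure (density \<mu> (\<lambda>x. ennreal (\<psi> x))) (space (density \<mu> (\<lambda>x. ennreal (\<psi> x))))
        = (\<integral>\<^sup>+x. ennreal (\<psi> x) * indicator (space \<mu>) x \<partial>\<mu>)"
      using pm by (simp add: emeasure_density)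
    also have "\<dots> = (\<integral>\<^sup>+x. ennreal (\<psi> x) \<partial>\<mu>)" by (rule nn_integral_cong) simp
    also have "\<dots> = ennreal (\<integral>x. \<psi> x \<partial>\<mu>)" by (rule nn_integral_eq_integral[OF I]) (simp add: nn)
    finally show "emeasure (density \<mu> (\<lambda>x. ennreal (\<psi> x))) (space (density \<mu> (\<lambda>x. ennreal (\<psi> x)))) \<noteq> \<infinity>" by simp
  qed
  show "measure (density \<mu> (\<lambda>x. ennreal (\<psi> x))) A = (\<integral>x. \<psi> x * indicator A x \<partial>\<mu>)" if A: "A \<in> sets ThetaM" for A
  proof -
    have "(\<integral>x. indicator A x \<partial>density \<mu> (\<lambda>x. ennreal (\<psi> x))) = (\<integral>x. \<psi> x * indicator A x \<partial>\<mu>)"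
      by (rule ig) (use A in simp)
    moreover have "A \<inter> space (density \<mu> (\<lambda>x. ennreal (\<psi> x))) = A"
      using A s sets.sets_into_space by (fastforce simp: space_eqT)
    ultimately show ?thesis by simp
  qed
qed

lemma int_sums:
  fixes \<phi> :: "(int^'d::finite \<Rightarrow> real) \<Rightarrow> real"
  assumes fm: "finite_measure \<mu>" and s: "sets \<mu> = sets ThetaM" and b: "bm \<phi>"
    and A: "range A \<subseteq> sets ThetaM" and disj: "disjoint_family A"
  shows "(\<lambda>n. \<integral>x. \<phi> x * indicator (A n) x \<partial>\<mu>) sums (\<integral>x. \<phi> x * indicator (\<Union>n. A n) x \<partial>\<mu>)"
proof -
  interpret finite_measure \<mu> by (rule fm)
  have meq: "borel_measurable \<mu> = borel_measurable ThetaM" by (rule measurable_cong_sets[OF s refl])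
  obtain K where K: "\<forall>x\<in>Theta. \<bar>\<phi> x\<bar> \<le> K" and pm: "\<phi> \<in> borel_measurable ThetaM" using b by (auto simp: bm_def)
  have An: "A n \<in> sets ThetaM" for n using A by auto
  have U: "(\<Union>n. A n) \<in> sets ThetaM" using An by auto
  have Ii: "integrable \<mu> (\<lambda>x. \<phi> x * indicator (A n) x)" for n
    by (rule bm_integrable[OF fm s bm_mult[OF b bm_indicator[OF An]]])
  have ps: "(\<Sum>n<N. \<integral>x. \<phi> x * indicator (A n) x \<partial>\<mu>) = (\<integral>x. (\<Sum>n<N. \<phi> x * indicator (A n) x) \<partial>\<mu>)" for N
    by (rule Bochner_Integration.integral_sum[symmetric]) (rule Ii)
  have "(\<lambda>N. \<integral>x. (\<Sum>n<N. \<phi> x * indicator (A n) x) \<partial>\<mu>) \<longlonglongrightarrow> (\<integral>x. \<phi> x * indicator (\<Union>n. A n) x \<partial>\<mu>)"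
  proof (rule integral_dominated_convergence[where w="\<lambda>_. K"])
    show "(\<lambda>x. \<phi> x * indicator (\<Union>n. A n) x) \<in> borel_measurable \<mu>"
      unfolding meq using pm U by (intro borel_measurable_times borel_measurable_indicator)
    show "(\<lambda>x. \<Sum>n<N. \<phi> x * indicator (A n) x) \<in> borel_measurable \<mu>" for N
      unfolding meq using pm An by (intro borel_measurable_sum borel_measurable_times borel_measurable_indicator)
    show "integrable \<mu> (\<lambda>_. K)" by simp
    show "AE x in \<mu>. (\<lambda>N. \<Sum>n<N. \<phi> x * indicator (A n) x) \<longlonglongrightarrow> \<phi> x * indicator (\<Union>n. A n) x"
    proof (rule AE_I2)
      fix x
      have "(\<lambda>n. indicator (A n) x) sums (indicator (\<Union>n. A n) x :: real)"
        by (rule indicator_sums) (use disj in \<open>auto simp: disjoint_family_on_def\<close>)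
      then have "(\<lambda>N. \<Sum>n<N. indicator (A n) x) \<longlonglongrightarrow> (indicator (\<Union>n. A n) x :: real)"
        by (simp add: sums_def)
      then have "(\<lambda>N. \<phi> x * (\<Sum>n<N. indicator (A n) x)) \<longlonglongrightarrow> \<phi> x * indicator (\<Union>n. A n) x"
        by (rule tendsto_mult_left)
      then show "(\<lambda>N. \<Sum>n<N. \<phi> x * indicator (A n) x) \<longlonglongrightarrow> \<phi> x * indicator (\<Union>n. A n) x"
        by (simp add: sum_distrib_left)
    qed
    show "AE x in \<mu>. norm (\<Sum>n<N. \<phi> x * indicator (A n) x) \<le> K" for N
    proof (rule AE_I2)
      fix x assume x: "x \<in> space \<mu>"
      have "(\<Sum>n<N. indicator (A n) x) = (indicator (\<Union>n\<in>{..<N}. A n) x :: real)"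
        by (rule indicator_UN_disjoint[symmetric]) (use disj in \<open>auto simp: disjoint_family_on_def\<close>)
      then have "\<bar>\<Sum>n<N. indicator (A n) x :: real\<bar> \<le> 1" by (simp add: indicator_def)
      moreover have "\<bar>\<phi> x\<bar> \<le> K" using K x space_eqT[OF s] by auto
      ultimately have "\<bar>\<phi> x\<bar> * \<bar>\<Sum>n<N. indicator (A n) x :: real\<bar> \<le> K * 1"
        by (intro mult_mono) auto
      then show "norm (\<Sum>n<N. \<phi> x * indicator (A n) x) \<le> K"
        by (simp add: sum_distrib_left[symmetric] abs_mult)
    qed
  qed
  then show ?thesis unfolding sums_def ps .
qed


lemma mult_val:
  assumes rep: "cmrep \<nu> \<mu>1 \<mu>2 \<mu>3 \<mu>4" and b: "bm \<phi>" and A: "A \<in> sets ThetaM"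
  shows "mult_measure \<phi> \<nu> A = cmexpr \<mu>1 \<mu>2 \<mu>3 \<mu>4 (\<lambda>\<theta>. \<phi> \<theta> * indicator A \<theta>)"
  using A cm_integral_rep[OF rep bm_mult[OF b bm_indicator[OF A]]] by (simp add: mult_measure_def)

lemma cm_mult:
  assumes cm: "complex_measure \<nu>" and b: "bm \<phi>"
  shows "complex_measure (mult_measure \<phi> \<nu>)"
proof -
  obtain \<mu>1 \<mu>2 \<mu>3 \<mu>4 where rep: "cmrep \<nu> \<mu>1 \<mu>2 \<mu>3 \<mu>4" using cm_rep_exists[OF cm] by blast
  have ok: "finite_measure \<mu> \<and> sets \<mu> = sets ThetaM" if "\<mu> \<in> {\<mu>1,\<mu>2,\<mu>3,\<mu>4}" for \<mu>
    using rep_ok[OF rep that] .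
  have out: "\<forall>A. A \<notin> sets ThetaM \<longrightarrow> mult_measure \<phi> \<nu> A = 0" by (simp add: mult_measure_def)
  have emp: "mult_measure \<phi> \<nu> {} = 0" using mult_val[OF rep b, of "{}"] by (simp add: cmexpr_def)
  have sums: "(\<lambda>n. mult_measure \<phi> \<nu> (A n)) sums mult_measure \<phi> \<nu> (\<Union>n. A n)"
    if A: "range A \<subseteq> sets ThetaM" and d: "disjoint_family A" for A
  proof -
    have An: "A n \<in> sets ThetaM" for n using A by auto
    have U: "(\<Union>n. A n) \<in> sets ThetaM" using An by auto
    have s: "(\<lambda>n. \<integral>x. \<phi> x * indicator (A n) x \<partial>\<mu>) sums (\<integral>x. \<phi> x * indicator (\<Union>n. A n) x \<partial>\<mu>)"
      if "\<mu> \<in> {\<mu>1,\<mu>2,\<mu>3,\<mu>4}" for \<mu>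
      using ok[OF that] by (intro int_sums[OF _ _ b A d]) auto
    have "(\<lambda>n. cmexpr \<mu>1 \<mu>2 \<mu>3 \<mu>4 (\<lambda>\<theta>. \<phi> \<theta> * indicator (A n) \<theta>)) sums cmexpr \<mu>1 \<mu>2 \<mu>3 \<mu>4 (\<lambda>\<theta>. \<phi> \<theta> * indicator (\<Union>n. A n) \<theta>)"
      unfolding cmexpr_def
      by (intro sums_add sums_mult sums_of_real sums_diff s) auto
    then show ?thesis using mult_val[OF rep b An] mult_val[OF rep b U] by simp
  qed
  show ?thesis unfolding complex_measure_def using out emp sums by blast
qed

lemma cm_comb:
  assumes c1: "complex_measure \<nu>1" and c2: "complex_measure \<nu>2"
  shows "complex_measure (\<lambda>A. a * \<nu>1 A + b * \<nu>2 A)"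
proof -
  have "(\<lambda>n. a * \<nu>1 (A n) + b * \<nu>2 (A n)) sums (a * \<nu>1 (\<Union>n. A n) + b * \<nu>2 (\<Union>n. A n))"
    if "range A \<subseteq> sets ThetaM" "disjoint_family A" for A
    using c1 c2 that unfolding complex_measure_def by (intro sums_add sums_mult) auto
  then show ?thesis using c1 c2 unfolding complex_measure_def by auto
qed

lemma cm_lin_nu:
  fixes \<nu>1 \<nu>2 :: "(int^'d::finite \<Rightarrow> real) set \<Rightarrow> complex"
  assumes c1: "complex_measure \<nu>1" and c2: "complex_measure \<nu>2" and f: "bm f"
  shows "cm_integral (\<lambda>A. a * \<nu>1 A + b * \<nu>2 A) f = a * cm_integral \<nu>1 f + b * cm_integral \<nu>2 f"
proof -
  obtain p1 p2 p3 p4 where r1: "cmrep \<nu>1 p1 p2 p3 p4" using cm_rep_exists[OF c1] by blast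
  obtain q1 q2 q3 q4 where r2: "cmrep \<nu>2 q1 q2 q3 q4" using cm_rep_exists[OF c2] by blast
  obtain m1 m2 m3 m4 where r3: "cmrep (\<lambda>A. a * \<nu>1 A + b * \<nu>2 A) m1 m2 m3 m4"
    using cm_rep_exists[OF cm_comb[OF c1 c2]] by blast
  have ok: "\<forall>(c,m)\<in>set [(c1,p1),(c2,p2),(c3,p3),(c4,p4),(c5,q1),(c6,q2),(c7,q3),(c8,q4)].
      finite_measure m \<and> sets m = sets ThetaM" for c1 c2 c3 c4 c5 c6 c7 c8
    using rep_ok[OF r1] rep_ok[OF r2] by auto
  let ?L = "[(Re a,p1),(-Re a,p2),(-Im a,p3),(Im a,p4),(Re b,q1),(-Re b,q2),(-Im b,q3),(Im b,q4)]"
  let ?L' = "[(Im a,p1),(-Im a,p2),(Re a,p3),(-Re a,p4),(Im b,q1),(-Im b,q2),(Re b,q3),(-Re b,q4)]"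
  have "Re (cm_integral (\<lambda>A. a * \<nu>1 A + b * \<nu>2 A) f) = lint ?L f"
  proof (rule cm_re_im(1)[OF r3 ok f])
    show "\<forall>A\<in>sets ThetaM. Re (a * \<nu>1 A + b * \<nu>2 A) = lsetv ?L A"
    proof
      fix A :: "(int^'d \<Rightarrow> real) set" assume A: "A \<in> sets ThetaM"
      have "Re (a * \<nu>1 A + b * \<nu>2 A) = Re a * Re (\<nu>1 A) - Im a * Im (\<nu>1 A) + (Re b * Re (\<nu>2 A) - Im b * Im (\<nu>2 A))" by simp
      also have "\<dots> = lsetv ?L A"
        unfolding cmrep_Re[OF r1 A] cmrep_Im[OF r1 A] cmrep_Re[OF r2 A] cmrep_Im[OF r2 A] by (simp add: algebra_simps)
      finally show "Re (a * \<nu>1 A + b * \<nu>2 A) = lsetv ?L A" .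
    qed
  qed
  moreover have "Im (cm_integral (\<lambda>A. a * \<nu>1 A + b * \<nu>2 A) f) = lint ?L' f"
  proof (rule cm_re_im(2)[OF r3 ok f])
    show "\<forall>A\<in>sets ThetaM. Im (a * \<nu>1 A + b * \<nu>2 A) = lsetv ?L' A"
    proof
      fix A :: "(int^'d \<Rightarrow> real) set" assume A: "A \<in> sets ThetaM"
      have "Im (a * \<nu>1 A + b * \<nu>2 A) = Im a * Re (\<nu>1 A) + Re a * Im (\<nu>1 A) + (Im b * Re (\<nu>2 A) + Re b * Im (\<nu>2 A))" by simp
      also have "\<dots> = lsetv ?L' A"
        unfolding cmrep_Re[OF r1 A] cmrep_Im[OF r1 A] cmrep_Re[OF r2 A] cmrep_Im[OF r2 A] by (simp add: algebra_simps)
      finally show "Im (a * \<nu>1 A + b * \<nu>2 A) = lsetv ?L' A" .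
    qed
  qed
  ultimately show ?thesis
    unfolding cm_integral_rep[OF r1 f] cm_integral_rep[OF r2 f]
    by (simp add: complex_eq_iff cmexpr_def algebra_simps)
qed


lemma split_int:
  assumes fm: "finite_measure \<mu>" and s: "sets \<mu> = sets ThetaM" and b: "bm \<phi>" and h: "bm h"
  shows "(\<integral>x. max (\<phi> x) 0 * h x \<partial>\<mu>) - (\<integral>x. max (- \<phi> x) 0 * h x \<partial>\<mu>) = (\<integral>x. \<phi> x * h x \<partial>\<mu>)"
proof -
  have I1: "integrable \<mu> (\<lambda>x. max (\<phi> x) 0 * h x)" by (rule bm_integrable[OF fm s bm_mult[OF bm_max0[OF b] h]])
  have I2: "integrable \<mu> (\<lambda>x. max (- \<phi> x) 0 * h x)" by (rule bm_integrable[OF fm s bm_mult[OF bm_max0[OF bm_neg[OF b]] h]])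
  have "(\<integral>x. max (\<phi> x) 0 * h x \<partial>\<mu>) - (\<integral>x. max (- \<phi> x) 0 * h x \<partial>\<mu>) = (\<integral>x. max (\<phi> x) 0 * h x - max (- \<phi> x) 0 * h x \<partial>\<mu>)"
    by (rule Bochner_Integration.integral_diff[OF I1 I2, symmetric])
  also have "\<dots> = (\<integral>x. \<phi> x * h x \<partial>\<mu>)"
    by (rule Bochner_Integration.integral_cong[OF refl]) (simp add: max_def algebra_simps)
  finally show ?thesis .
qed

lemma mult_int:
  fixes \<nu> :: "(int^'d::finite \<Rightarrow> real) set \<Rightarrow> complex"
  assumes cm: "complex_measure \<nu>" and b: "bm \<phi>" and g: "bm g"
  shows "cm_integral (mult_measure \<phi> \<nu>) g = cm_integral \<nu> (\<lambda>\<theta>. \<phi> \<theta> * g \<theta>)"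
proof -
  obtain \<mu>1 \<mu>2 \<mu>3 \<mu>4 where rep: "cmrep \<nu> \<mu>1 \<mu>2 \<mu>3 \<mu>4" using cm_rep_exists[OF cm] by blast
  obtain m1 m2 m3 m4 where rep': "cmrep (mult_measure \<phi> \<nu>) m1 m2 m3 m4"
    using cm_rep_exists[OF cm_mult[OF cm b]] by blast
  define pp where "pp x = max (\<phi> x) 0" for x
  define pm where "pm x = max (- \<phi> x) 0" for x
  have bpp: "bm pp" unfolding pp_def by (rule bm_max0[OF b])
  have bpm: "bm pm" unfolding pm_def by (rule bm_max0[OF bm_neg[OF b]])
  have npp: "0 \<le> pp x" "0 \<le> pm x" for x by (simp_all add: pp_def pm_def)
  define D where "D \<mu> \<psi> = density \<mu> (\<lambda>x. ennreal (\<psi> x))" for \<mu> :: "(int^'d \<Rightarrow> real) measure" and \<psi>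
  have okm: "finite_measure \<mu> \<and> sets \<mu> = sets ThetaM" if "\<mu> \<in> {\<mu>1,\<mu>2,\<mu>3,\<mu>4}" for \<mu>
    using rep_ok[OF rep that] .
  have Dok: "finite_measure (D \<mu> \<psi>) \<and> sets (D \<mu> \<psi>) = sets ThetaM"
    if "\<mu> \<in> {\<mu>1,\<mu>2,\<mu>3,\<mu>4}" "\<psi> \<in> {pp, pm}" for \<mu> \<psi>
    using okm[OF that(1)] that(2) dens_facts(1,2)[of \<mu> \<psi>] bpp bpm npp by (auto simp: D_def)
  have Dm: "measure (D \<mu> \<psi>) A = (\<integral>x. \<psi> x * indicator A x \<partial>\<mu>)"
    if "\<mu> \<in> {\<mu>1,\<mu>2,\<mu>3,\<mu>4}" "\<psi> \<in> {pp, pm}" "A \<in> sets ThetaM" for \<mu> \<psi> A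
    using okm[OF that(1)] that(2,3) dens_facts(3)[of \<mu> \<psi>] bpp bpm npp by (auto simp: D_def)
  have gm: "g \<in> borel_measurable ThetaM" using g by (simp add: bm_def)
  have Di: "(\<integral>x. g x \<partial>D \<mu> \<psi>) = (\<integral>x. \<psi> x * g x \<partial>\<mu>)"
    if "\<mu> \<in> {\<mu>1,\<mu>2,\<mu>3,\<mu>4}" "\<psi> \<in> {pp, pm}" for \<mu> \<psi>
    using okm[OF that(1)] that(2) dens_facts(4)[of \<mu> \<psi> g] bpp bpm npp gm by (auto simp: D_def)
  have sp: "(\<integral>x. pp x * h x \<partial>\<mu>) - (\<integral>x. pm x * h x \<partial>\<mu>) = (\<integral>x. \<phi> x * h x \<partial>\<mu>)"
    if "\<mu> \<in> {\<mu>1,\<mu>2,\<mu>3,\<mu>4}" "bm h" for \<mu> h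
    unfolding pp_def pm_def using okm[OF that(1)] split_int[OF _ _ b that(2)] by blast
  have bpg: "bm (\<lambda>\<theta>. \<phi> \<theta> * g \<theta>)" by (rule bm_mult[OF b g])
  let ?L1 = "[(1, D \<mu>1 pp), (-1, D \<mu>1 pm), (-1, D \<mu>2 pp), (1, D \<mu>2 pm)]"
  let ?L2 = "[(1, D \<mu>3 pp), (-1, D \<mu>3 pm), (-1, D \<mu>4 pp), (1, D \<mu>4 pm)]"
  have "Re (cm_integral (mult_measure \<phi> \<nu>) g) = lint ?L1 g"
  proof (rule cm_re_im(1)[OF rep' _ g])
    show "\<forall>(c, m)\<in>set ?L1. finite_measure m \<and> sets m = sets ThetaM" using Dok by auto
    show "\<forall>A\<in>sets ThetaM. Re (mult_measure \<phi> \<nu> A) = lsetv ?L1 A"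
    proof
      fix A :: "(int^'d \<Rightarrow> real) set" assume A: "A \<in> sets ThetaM"
      have "Re (mult_measure \<phi> \<nu> A) = (\<integral>x. \<phi> x * indicator A x \<partial>\<mu>1) - (\<integral>x. \<phi> x * indicator A x \<partial>\<mu>2)"
        by (simp add: mult_val[OF rep b A] cmexpr_Re)
      also have "\<dots> = lsetv ?L1 A"
        using Dm[of \<mu>1 pp A] Dm[of \<mu>1 pm A] Dm[of \<mu>2 pp A] Dm[of \<mu>2 pm A] A
          sp[of \<mu>1 "indicator A"] sp[of \<mu>2 "indicator A"] bm_indicator[OF A] by simp
      finally show "Re (mult_measure \<phi> \<nu> A) = lsetv ?L1 A" .
    qed
  qed
  also have "\<dots> = (\<integral>x. \<phi> x * g x \<partial>\<mu>1) - (\<integral>x. \<phi> x * g x \<partial>\<mu>2)"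
    using Di[of \<mu>1 pp] Di[of \<mu>1 pm] Di[of \<mu>2 pp] Di[of \<mu>2 pm] sp[of \<mu>1 g] sp[of \<mu>2 g] g by simp
  also have "\<dots> = Re (cm_integral \<nu> (\<lambda>\<theta>. \<phi> \<theta> * g \<theta>))"
    by (simp add: cm_integral_rep[OF rep bpg] cmexpr_Re)
  finally have re: "Re (cm_integral (mult_measure \<phi> \<nu>) g) = Re (cm_integral \<nu> (\<lambda>\<theta>. \<phi> \<theta> * g \<theta>))" .
  have "Im (cm_integral (mult_measure \<phi> \<nu>) g) = lint ?L2 g"
  proof (rule cm_re_im(2)[OF rep' _ g])
    show "\<forall>(c, m)\<in>set ?L2. finite_measure m \<and> sets m = sets ThetaM" using Dok by auto
    show "\<forall>A\<in>sets ThetaM. Im (mult_measure \<phi> \<nu> A) = lsetv ?L2 A"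
    proof
      fix A :: "(int^'d \<Rightarrow> real) set" assume A: "A \<in> sets ThetaM"
      have "Im (mult_measure \<phi> \<nu> A) = (\<integral>x. \<phi> x * indicator A x \<partial>\<mu>3) - (\<integral>x. \<phi> x * indicator A x \<partial>\<mu>4)"
        by (simp add: mult_val[OF rep b A] cmexpr_Im)
      also have "\<dots> = lsetv ?L2 A"
        using Dm[of \<mu>3 pp A] Dm[of \<mu>3 pm A] Dm[of \<mu>4 pp A] Dm[of \<mu>4 pm A] A
          sp[of \<mu>3 "indicator A"] sp[of \<mu>4 "indicator A"] bm_indicator[OF A] by simp
      finally show "Im (mult_measure \<phi> \<nu> A) = lsetv ?L2 A" .
    qed
  qed
  also have "\<dots> = (\<integral>x. \<phi> x * g x \<partial>\<mu>3) - (\<integral>x. \<phi> x * g x \<partial>\<mu>4)"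
    using Di[of \<mu>3 pp] Di[of \<mu>3 pm] Di[of \<mu>4 pp] Di[of \<mu>4 pm] sp[of \<mu>3 g] sp[of \<mu>4 g] g by simp
  also have "\<dots> = Im (cm_integral \<nu> (\<lambda>\<theta>. \<phi> \<theta> * g \<theta>))"
    by (simp add: cm_integral_rep[OF rep bpg] cmexpr_Im)
  finally have im: "Im (cm_integral (mult_measure \<phi> \<nu>) g) = Im (cm_integral \<nu> (\<lambda>\<theta>. \<phi> \<theta> * g \<theta>))" .
  show ?thesis using re im by (simp add: complex_eq_iff)
qed


lemma partial_nonlocal:
  assumes S: "\<forall>\<theta> \<theta>'. (\<forall>j\<in>S. \<theta> j = \<theta>' j) \<longrightarrow> \<phi> \<theta> = \<phi> \<theta>'" and i: "i \<notin> S" and th: "\<theta> \<in> Theta"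
  shows "partial i \<phi> \<theta> = 0"
proof (rule partial_eq[OF th])
  have "(\<lambda>t. \<phi> (\<theta>(i:=t))) = (\<lambda>t. \<phi> \<theta>)" using S i by (auto intro!: ext)
  then show "((\<lambda>t. \<phi> (\<theta>(i:=t))) has_real_derivative 0) (at (\<theta> i) within {0..1})" by simp
qed

lemma main_bound:
  fixes \<phi> :: "(int^'d::finite \<Rightarrow> real) \<Rightarrow> real"
  assumes loc: "local_fun \<phi>" and ck: "Ck 1 \<phi>"
  obtains C where "C \<ge> 0" "\<And>\<nu>. \<nu> \<in> Bspace \<Longrightarrow> complex_measure (mult_measure \<phi> \<nu>) \<and> cm_norm (mult_measure \<phi> \<nu>) \<le> ereal C * cm_norm \<nu>"
proof -
  have cphi: "continuous_on Theta \<phi>" using ck by simp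
  have hp: "has_partial i \<phi>" for i using ck by simp
  have cpart: "continuous_on Theta (partial i \<phi>)" for i using ck by simp
  have bphi: "bm \<phi>" by (rule cont_bm[OF cphi])
  obtain M0 where M0: "\<forall>\<theta>\<in>Theta. \<bar>\<phi> \<theta>\<bar> \<le> M0" using cont_bdd[OF cphi] by blast
  define M where "M = max M0 0"
  have M: "\<forall>\<theta>\<in>Theta. \<bar>\<phi> \<theta>\<bar> \<le> M" "M \<ge> 0" using M0 by (auto simp: M_def)
  obtain S where S: "finite S" "\<forall>\<theta> \<theta>'. (\<forall>j\<in>S. \<theta> j = \<theta>' j) \<longrightarrow> \<phi> \<theta> = \<phi> \<theta>'"
    using loc unfolding local_fun_def by blast
  have "\<forall>i. \<exists>K. \<forall>\<theta>\<in>Theta. \<bar>partial i \<phi> \<theta>\<bar> \<le> K" using cont_bdd[OF cpart] by blast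
  then obtain Kf where Kf: "\<And>i \<theta>. \<theta> \<in> Theta \<Longrightarrow> \<bar>partial i \<phi> \<theta>\<bar> \<le> Kf i" by metis
  define D where "D = (\<Sum>i\<in>S. max (Kf i) 0)"
  have D0: "D \<ge> 0" unfolding D_def by (rule sum_nonneg) simp
  have Db: "\<bar>partial i \<phi> \<theta>\<bar> \<le> D" if "\<theta> \<in> Theta" for i \<theta>
  proof (cases "i \<in> S")
    case True
    have "\<bar>partial i \<phi> \<theta>\<bar> \<le> max (Kf i) 0" using Kf[OF that, of i] by simp
    also have "\<dots> \<le> D" unfolding D_def by (rule member_le_sum) (use True S(1) in auto)
    finally show ?thesis .
  next
    case False
    then show ?thesis using partial_nonlocal[OF S(2) False that] D0 by simp
  qed
  define C where "C = M + D"
  show ?thesis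
  proof (rule that[of C])
    show "C \<ge> 0" using M D0 by (simp add: C_def)
    fix \<nu> :: "(int^'d \<Rightarrow> real) set \<Rightarrow> complex" assume nuB: "\<nu> \<in> Bspace"
    have cm: "complex_measure \<nu>" using nuB by (simp add: Bspace_def)
    obtain \<mu>1 \<mu>2 \<mu>3 \<mu>4 where rep: "cmrep \<nu> \<mu>1 \<mu>2 \<mu>3 \<mu>4" using cm_rep_exists[OF cm] by blast
    obtain N where N: "N \<ge> 0" "cm_norm \<nu> = ereal N"
      and Nb: "\<And>i \<psi>. smooth \<psi> \<Longrightarrow> local_fun \<psi> \<Longrightarrow> (\<forall>\<theta>\<in>Theta. \<bar>\<psi> \<theta>\<bar> \<le> 1) \<Longrightarrow> cmod (cm_integral \<nu> (partial i \<psi>)) \<le> N"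
      using norm_Bspace[OF nuB] by blast
    have key: "cmod (cm_integral (mult_measure \<phi> \<nu>) (partial i \<psi>)) \<le> C * N"
      if sm: "smooth \<psi>" and lo: "local_fun \<psi>" and b1: "\<forall>\<theta>\<in>Theta. \<bar>\<psi> \<theta>\<bar> \<le> 1" for i \<psi>
    proof -
      have ck1: "Ck 1 \<psi>" using sm by (simp add: smooth_def)
      have cpsi: "continuous_on Theta \<psi>" using ck1 by simp
      have hpsi: "has_partial i \<psi>" using ck1 by simp
      have cppsi: "continuous_on Theta (partial i \<psi>)" using ck1 by simp
      have bpp: "bm (partial i \<psi>)" by (rule cont_bm[OF cppsi])
      define g1 where "g1 \<theta> = \<phi> \<theta> * partial i \<psi> \<theta> + \<psi> \<theta> * partial i \<phi> \<theta>" for \<theta>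
      define g2 where "g2 \<theta> = \<psi> \<theta> * partial i \<phi> \<theta>" for \<theta>
      have cg1: "continuous_on Theta g1" unfolding g1_def
        by (intro continuous_on_add continuous_on_mult cphi cppsi cpsi cpart)
      have cg2: "continuous_on Theta g2" unfolding g2_def
        by (intro continuous_on_mult cpsi cpart)
      have "cm_integral (mult_measure \<phi> \<nu>) (partial i \<psi>) = cm_integral \<nu> (\<lambda>\<theta>. \<phi> \<theta> * partial i \<psi> \<theta>)"
        by (rule mult_int[OF cm bphi bpp])
      also have "(\<lambda>\<theta>. \<phi> \<theta> * partial i \<psi> \<theta>) = (\<lambda>\<theta>. g1 \<theta> - g2 \<theta>)"
        by (simp add: g1_def g2_def fun_eq_iff)
      also have "cm_integral \<nu> (\<lambda>\<theta>. g1 \<theta> - g2 \<theta>) = cm_integral \<nu> g1 - cm_integral \<nu> g2"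
        by (rule cm_diff[OF rep cont_bm[OF cg1] cont_bm[OF cg2]])
      finally have eq: "cm_integral (mult_measure \<phi> \<nu>) (partial i \<psi>) = cm_integral \<nu> g1 - cm_integral \<nu> g2" .
      have e1: "cmod (cm_integral \<nu> g1) \<le> M * N"
      proof (rule deriv_bound[OF rep Nb N(1), where h="\<lambda>\<theta>. \<phi> \<theta> * \<psi> \<theta>" and i=i])
        show "continuous_on Theta (\<lambda>\<theta>. \<phi> \<theta> * \<psi> \<theta>)" by (intro continuous_on_mult cphi cpsi)
        show "\<forall>\<theta>\<in>Theta. \<bar>\<phi> \<theta> * \<psi> \<theta>\<bar> \<le> M"
        proof
          fix \<theta> :: "int^'d \<Rightarrow> real" assume "\<theta> \<in> Theta"
          then have "\<bar>\<phi> \<theta>\<bar> \<le> M" "\<bar>\<psi> \<theta>\<bar> \<le> 1" using M b1 by auto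
          then have "\<bar>\<phi> \<theta>\<bar> * \<bar>\<psi> \<theta>\<bar> \<le> M * 1" by (intro mult_mono) auto
          then show "\<bar>\<phi> \<theta> * \<psi> \<theta>\<bar> \<le> M" by (simp add: abs_mult)
        qed
        show "continuous_on Theta g1" by (rule cg1)
        show "\<forall>\<theta>\<in>Theta. ((\<lambda>t. \<phi> (\<theta>(i:=t)) * \<psi> (\<theta>(i:=t))) has_real_derivative g1 \<theta>) (at (\<theta> i) within {0..1})"
        proof
          fix \<theta> :: "int^'d \<Rightarrow> real" assume th: "\<theta> \<in> Theta"
          have d1: "((\<lambda>t. \<phi> (\<theta>(i:=t))) has_real_derivative partial i \<phi> \<theta>) (at (\<theta> i) within {0..1})"
            by (rule partial_deriv[OF hp th])
          have d2: "((\<lambda>t. \<psi> (\<theta>(i:=t))) has_real_derivative partial i \<psi> \<theta>) (at (\<theta> i) within {0..1})"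
            by (rule partial_deriv[OF hpsi th])
          show "((\<lambda>t. \<phi> (\<theta>(i:=t)) * \<psi> (\<theta>(i:=t))) has_real_derivative g1 \<theta>) (at (\<theta> i) within {0..1})"
            using DERIV_mult[OF d1 d2] by (simp add: g1_def algebra_simps)
        qed
      qed
      have e2: "cmod (cm_integral \<nu> g2) \<le> D * N"
      proof (rule cont_bound[OF rep Nb N(1) cg2])
        show "\<forall>\<theta>\<in>Theta. \<bar>g2 \<theta>\<bar> \<le> D"
        proof
          fix \<theta> :: "int^'d \<Rightarrow> real" assume th: "\<theta> \<in> Theta"
          have "\<bar>\<psi> \<theta>\<bar> * \<bar>partial i \<phi> \<theta>\<bar> \<le> 1 * D" using b1 th Db[OF th, of i] by (intro mult_mono) auto
          then show "\<bar>g2 \<theta>\<bar> \<le> D" by (simp add: g2_def abs_mult)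
        qed
      qed
      have "cmod (cm_integral (mult_measure \<phi> \<nu>) (partial i \<psi>)) \<le> cmod (cm_integral \<nu> g1) + cmod (cm_integral \<nu> g2)"
        unfolding eq by (rule norm_triangle_ineq4)
      also have "\<dots> \<le> M * N + D * N" using e1 e2 by linarith
      finally show ?thesis by (simp add: C_def algebra_simps)
    qed
    have "cm_norm (mult_measure \<phi> \<nu>) \<le> ereal (C * N)"
      unfolding cm_norm_def by (rule SUP_least) (use key in auto)
    then have "cm_norm (mult_measure \<phi> \<nu>) \<le> ereal C * cm_norm \<nu>" using N by simp
    then show "complex_measure (mult_measure \<phi> \<nu>) \<and> cm_norm (mult_measure \<phi> \<nu>) \<le> ereal C * cm_norm \<nu>"
      using cm_mult[OF cm bphi] by simp
  qed
qed

theorem lemma3p3: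
  fixes \<phi> :: "(int^'d::finite \<Rightarrow> real) \<Rightarrow> real"
  assumes "local_fun \<phi>" and "Ck 1 \<phi>"
  shows "(\<forall>\<nu>\<in>Bspace. mult_measure \<phi> \<nu> \<in> Bspace)
    \<and> (\<forall>\<nu>1\<in>Bspace. \<forall>\<nu>2\<in>Bspace. \<forall>a b::complex.
         mult_measure \<phi> (\<lambda>A. a * \<nu>1 A + b * \<nu>2 A) = (\<lambda>A. a * mult_measure \<phi> \<nu>1 A + b * mult_measure \<phi> \<nu>2 A))
    \<and> (\<exists>C::real. \<forall>\<nu>\<in>Bspace. cm_norm (mult_measure \<phi> \<nu>) \<le> ereal C * cm_norm \<nu>)"
proof -
  obtain C where C: "C \<ge> 0" and CB: "\<And>\<nu>. \<nu> \<in> Bspace \<Longrightarrow> complex_measure (mult_measure \<phi> \<nu>) \<and> cm_norm (mult_measure \<phi> \<nu>) \<le> ereal C * cm_norm \<nu>"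
    using main_bound[OF assms] by blast
  have bphi: "bm \<phi>" using assms(2) by (intro cont_bm) simp
  have 1: "mult_measure \<phi> \<nu> \<in> Bspace" if nB: "\<nu> \<in> Bspace" for \<nu>
  proof -
    obtain N where "N \<ge> 0" and Ne: "cm_norm \<nu> = ereal N"
      and "\<And>i \<psi>. smooth \<psi> \<Longrightarrow> local_fun \<psi> \<Longrightarrow> (\<forall>\<theta>\<in>Theta. \<bar>\<psi> \<theta>\<bar> \<le> 1) \<Longrightarrow> cmod (cm_integral \<nu> (partial i \<psi>)) \<le> N"
      by (rule norm_Bspace[OF nB]) blast
    have "cm_norm (mult_measure \<phi> \<nu>) \<le> ereal (C * N)" using CB[OF nB] Ne by simp
    then have "cm_norm (mult_measure \<phi> \<nu>) < \<infinity>" using le_less_trans by fastforce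
    then show ?thesis using CB[OF nB] by (simp add: Bspace_def)
  qed
  have 2: "mult_measure \<phi> (\<lambda>A. a * \<nu>1 A + b * \<nu>2 A) = (\<lambda>A. a * mult_measure \<phi> \<nu>1 A + b * mult_measure \<phi> \<nu>2 A)"
    if "\<nu>1 \<in> Bspace" "\<nu>2 \<in> Bspace" for \<nu>1 \<nu>2 and a b :: complex
  proof
    fix A :: "(int^'d \<Rightarrow> real) set"
    have c1: "complex_measure \<nu>1" and c2: "complex_measure \<nu>2" using that by (auto simp: Bspace_def)
    show "mult_measure \<phi> (\<lambda>A. a * \<nu>1 A + b * \<nu>2 A) A = a * mult_measure \<phi> \<nu>1 A + b * mult_measure \<phi> \<nu>2 A"
    proof (cases "A \<in> sets ThetaM")
      case True
      then show ?thesis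
        using cm_lin_nu[OF c1 c2 bm_mult[OF bphi bm_indicator[OF True]], of a b]
        by (simp add: mult_measure_def)
    next
      case False
      then show ?thesis by (simp add: mult_measure_def)
    qed
  qed
  show ?thesis using 1 2 CB by blast
qed


end
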